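(* Let $M,n\ge 1$ and let $f^i_m:\mathbb{R}^d\to\mathbb{R}$ ($m\in[M]$, $i\in[n]$) be differentiable, convex and $L$-smooth, with $f_m=\frac1n\sum_{i=1}^n f^i_m$ and $f=\frac1M\sum_{m=1}^M f_m$. Assume $f$ is $L$-smooth and $\mu$-strongly convex with $\mu>0$, and let $x_*$ be its minimizer. Run Nastya (Random-Reshuffling option) with client stepsize $\gamma>0$, server stepsize $\eta$ and cohort size $C\in\{1,\dots,M\}$, where $\gamma n\le \eta\le \frac{1}{16L}$. Then for every $T\ge 1$, $$\mathbb{E}\big[\|x_T-x_*\|^2\big]\le \Big(1-\frac{\eta\mu}{2}\Big)^T\|x_0-x_*\|^2+\frac{5\gamma^2 nL}{\mu}\Big(\frac1M\sum_{m=1}^M\sigma_{*,m}^2+n\sigma_*^2\Big)+\frac{8\eta}{\mu}\cdot\frac{M-C}{C\max\{M-1,1\}}\,\sigma_*^2 .$$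
   Context: Here $[k]=\{1,\dots,k\}$. A function $h$ is $L$-smooth if $\|\nabla h(x)-\nabla h(y)\|\le L\|x-y\|$ for all $x,y$. Algorithm Nastya (Random-Reshuffling option), with inputs $\gamma>0$, $\eta\ge0$, $C\in\{1,\dots,M\}$, $x_0\in\mathbb{R}^d$. For each round $t=0,1,\dots,T-1$: (i) sample a cohort $S_t\subseteq[M]$ uniformly at random among all subsets of cardinality $C$; (ii) for each $m\in S_t$, sample a permutation $\pi_m=(\pi_m^0,\dots,\pi_m^{n-1})$ of $[n]$ uniformly at random, and set $x^0_{t,m}=x_t$ and $x^{i+1}_{t,m}=x^i_{t,m}-\gamma\nabla f_m^{\pi_m^i}(x^i_{t,m})$ for $i=0,\dots,n-1$; (iii) set $g_{t,m}=\frac{1}{\gamma n}(x_t-x^n_{t,m})$, $g_t=\frac1C\sum_{m\in S_t}g_{t,m}$ and $x_{t+1}=x_t-\eta g_t$. All samplings (cohorts and permutations, across clients and rounds) are mutually independent and independent of the past. Notation: $\sigma_*^2=\frac1M\sum_{m=1}^M\|\nabla f_m(x_* )\|^2$ and $\sigma_{*,m}^2=\frac1n\sum_{i=1}^n\|\nabla f^i_m(x_* )\|^2$. *)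

theory Defs
  imports "HOL-Analysis.Analysis" "HOL-Probability.Probability"
begin

text \<open>Indices are 0-based: clients m in {0..<M}, data points i in {0..<n}.
  f m i is the function f_m^(i+1); g m i is its gradient.\<close>

definition L_smooth_grad :: "('a::euclidean_space \<Rightarrow> 'a) \<Rightarrow> real \<Rightarrow> bool" where
  "L_smooth_grad h' L \<longleftrightarrow> (\<forall>x y. norm (h' x - h' y) \<le> L * norm (x - y))"

definition strongly_convex :: "('a::euclidean_space \<Rightarrow> real) \<Rightarrow> real \<Rightarrow> bool" where
  "strongly_convex h \<mu> \<longleftrightarrow> (\<forall>x y t. 0 \<le> t \<and> t \<le> 1 \<longrightarrow>
     h (t *\<^sub>R x + (1 - t) *\<^sub>R y) \<le> t * h x + (1 - t) * h y - \<mu> / 2 * t * (1 - t) * (norm (x - y))\<^sup>2)"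

definition client_fun :: "nat \<Rightarrow> (nat \<Rightarrow> nat \<Rightarrow> 'a \<Rightarrow> 'b::real_vector) \<Rightarrow> nat \<Rightarrow> 'a \<Rightarrow> 'b" where
  "client_fun n f m x = (1 / real n) *\<^sub>R (\<Sum>i<n. f m i x)"

definition global_fun :: "nat \<Rightarrow> nat \<Rightarrow> (nat \<Rightarrow> nat \<Rightarrow> 'a \<Rightarrow> 'b::real_vector) \<Rightarrow> 'a \<Rightarrow> 'b" where
  "global_fun M n f x = (1 / real M) *\<^sub>R (\<Sum>m<M. client_fun n f m x)"

fun local_iter :: "(nat \<Rightarrow> nat \<Rightarrow> 'a::real_vector \<Rightarrow> 'a) \<Rightarrow> real \<Rightarrow> nat \<Rightarrow> (nat \<Rightarrow> nat) \<Rightarrow> 'a \<Rightarrow> nat \<Rightarrow> 'a" where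
  "local_iter g \<gamma> m \<pi> x 0 = x"
| "local_iter g \<gamma> m \<pi> x (Suc i) =
     (let y = local_iter g \<gamma> m \<pi> x i in y - \<gamma> *\<^sub>R g m (\<pi> i) y)"

definition cohorts :: "nat \<Rightarrow> nat \<Rightarrow> nat set set" where
  "cohorts M C = {S. S \<subseteq> {..<M} \<and> card S = C}"

definition perms :: "nat \<Rightarrow> (nat \<Rightarrow> nat) set" where
  "perms n = {p. p permutes {..<n}}"

definition nastya_step ::
  "nat \<Rightarrow> nat \<Rightarrow> nat \<Rightarrow> (nat \<Rightarrow> nat \<Rightarrow> 'a::real_vector \<Rightarrow> 'a) \<Rightarrow> real \<Rightarrow> real \<Rightarrow> 'a \<Rightarrow> 'a pmf" where
  "nastya_step M n C g \<gamma> \<eta> x =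
     bind_pmf (pmf_of_set (cohorts M C)) (\<lambda>S.
     bind_pmf (Pi_pmf S id (\<lambda>_. pmf_of_set (perms n))) (\<lambda>\<pi>.
       (let gm = (\<lambda>m. (1 / (\<gamma> * real n)) *\<^sub>R (x - local_iter g \<gamma> m (\<pi> m) x n));
            gt = (1 / real C) *\<^sub>R (\<Sum>m\<in>S. gm m)
        in return_pmf (x - \<eta> *\<^sub>R gt))))"

fun nastya ::
  "nat \<Rightarrow> nat \<Rightarrow> nat \<Rightarrow> (nat \<Rightarrow> nat \<Rightarrow> 'a::real_vector \<Rightarrow> 'a) \<Rightarrow> real \<Rightarrow> real \<Rightarrow> 'a \<Rightarrow> nat \<Rightarrow> 'a pmf" where
  "nastya M n C g \<gamma> \<eta> x0 0 = return_pmf x0"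
| "nastya M n C g \<gamma> \<eta> x0 (Suc t) = bind_pmf (nastya M n C g \<gamma> \<eta> x0 t) (nastya_step M n C g \<gamma> \<eta>)"

end

theory Submission
  imports Defs
begin


lemma descent_lemma:
  fixes \<phi> :: "'a::euclidean_space \<Rightarrow> real" and G :: "'a \<Rightarrow> 'a"
  assumes der: "\<And>x. (\<phi> has_derivative (\<lambda>h. G x \<bullet> h)) (at x)"
    and sm: "L_smooth_grad G L"
  shows "\<phi> y \<le> \<phi> x + G x \<bullet> (y - x) + L / 2 * (norm (y - x))\<^sup>2"
proof -
  define d where "d = y - x"
  define p where "p t = \<phi> (x + t *\<^sub>R d) - t * (G x \<bullet> d) - L / 2 * t\<^sup>2 * (norm d)\<^sup>2" for t :: real
  have dp: "DERIV p t :> (G (x + t *\<^sub>R d) \<bullet> d - G x \<bullet> d - L * t * (norm d)\<^sup>2)" for t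
  proof -
    have h1: "((\<lambda>t. x + t *\<^sub>R d) has_derivative (\<lambda>s. s *\<^sub>R d)) (at t)"
      by (auto intro!: derivative_eq_intros)
    have h2: "((\<lambda>t. \<phi> (x + t *\<^sub>R d)) has_derivative (\<lambda>s. G (x + t *\<^sub>R d) \<bullet> (s *\<^sub>R d))) (at t)"
      using has_derivative_compose[OF h1 der] by simp
    hence h3: "((\<lambda>t. \<phi> (x + t *\<^sub>R d)) has_real_derivative (G (x + t *\<^sub>R d) \<bullet> d)) (at t)"
      by (simp add: has_field_derivative_def mult.commute[of _ "G (x + t *\<^sub>R d) \<bullet> d"])
    show ?thesis unfolding p_def
      by (rule h3 derivative_eq_intros refl | simp add: power2_eq_square)+
  qed
  have nonpos: "G (x + t *\<^sub>R d) \<bullet> d - G x \<bullet> d - L * t * (norm d)\<^sup>2 \<le> 0" if "0 \<le> t" for t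
  proof -
    have "G (x + t *\<^sub>R d) \<bullet> d - G x \<bullet> d = (G (x + t *\<^sub>R d) - G x) \<bullet> d" by (simp add: inner_diff_left)
    also have "\<dots> \<le> norm (G (x + t *\<^sub>R d) - G x) * norm d" by (rule norm_cauchy_schwarz)
    also have "\<dots> \<le> L * norm (t *\<^sub>R d) * norm d"
      using sm unfolding L_smooth_grad_def
      by (metis add_diff_cancel_left' mult_right_mono norm_ge_zero)
    also have "\<dots> = L * t * (norm d)\<^sup>2" using that by (simp add: power2_eq_square)
    finally show ?thesis by simp
  qed
  have "p 1 \<le> p 0"
    by (rule DERIV_nonpos_imp_nonincreasing[of 0 1 p]) (use dp nonpos in force)+
  thus ?thesis unfolding p_def d_def by (simp add: algebra_simps)
qed

lemma convex_gradient_ineq: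
  fixes \<phi> :: "'a::euclidean_space \<Rightarrow> real" and G :: "'a \<Rightarrow> 'a"
  assumes der: "\<And>x. (\<phi> has_derivative (\<lambda>h. G x \<bullet> h)) (at x)"
    and cv: "convex_on UNIV \<phi>"
  shows "\<phi> x + G x \<bullet> (y - x) \<le> \<phi> y"
proof -
  define d where "d = y - x"
  define p where "p t = \<phi> (x + t *\<^sub>R d)" for t :: real
  have h1: "((\<lambda>t. x + t *\<^sub>R d) has_derivative (\<lambda>s. s *\<^sub>R d)) (at 0)"
    by (auto intro!: derivative_eq_intros)
  have h2: "(p has_derivative (\<lambda>s. G (x + 0 *\<^sub>R d) \<bullet> (s *\<^sub>R d))) (at 0)"
    unfolding p_def using has_derivative_compose[OF h1 der] by simp
  hence h3: "(p has_real_derivative (G x \<bullet> d)) (at 0 within UNIV)"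
    by (simp add: has_field_derivative_def mult.commute[of _ "G x \<bullet> d"])
  have cvp: "convex_on UNIV p"
  proof (rule convex_onI)
    fix t a b :: real assume "0 < t" "t < 1"
    have "x + ((1 - t) *\<^sub>R a + t *\<^sub>R b) *\<^sub>R d = (1 - t) *\<^sub>R (x + a *\<^sub>R d) + t *\<^sub>R (x + b *\<^sub>R d)"
      by (simp add: algebra_simps)
    thus "p ((1 - t) *\<^sub>R a + t *\<^sub>R b) \<le> (1 - t) * p a + t * p b"
      unfolding p_def using convex_onD[OF cv, of t "x + a *\<^sub>R d" "x + b *\<^sub>R d"] \<open>0 < t\<close> \<open>t < 1\<close>
      by simp
  qed simp
  have "p 1 - p 0 \<ge> (G x \<bullet> d) * (1 - 0)"
    by (rule convex_on_imp_above_tangent[OF cvp]) (use h3 in auto)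
  thus ?thesis unfolding p_def d_def by simp
qed

lemma cocoercive:
  fixes \<phi> :: "'a::euclidean_space \<Rightarrow> real" and G :: "'a \<Rightarrow> 'a"
  assumes der: "\<And>x. (\<phi> has_derivative (\<lambda>h. G x \<bullet> h)) (at x)"
    and cv: "convex_on UNIV \<phi>" and sm: "L_smooth_grad G L" and L: "L > 0"
  shows "(norm (G x - G y))\<^sup>2 \<le> 2 * L * (\<phi> x - \<phi> y - G y \<bullet> (x - y))"
proof -
  define u where "u = G x - G y"
  define z where "z = x - (1 / L) *\<^sub>R u"
  have a: "\<phi> y + G y \<bullet> (z - y) \<le> \<phi> z" by (rule convex_gradient_ineq[OF der cv])
  have b: "\<phi> z \<le> \<phi> x + G x \<bullet> (z - x) + L / 2 * (norm (z - x))\<^sup>2" by (rule descent_lemma[OF der sm])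
  have e1: "G y \<bullet> (z - y) = G y \<bullet> (x - y) - (1/L) * (G y \<bullet> u)"
    unfolding z_def by (simp add: inner_diff_right algebra_simps)
  have e2: "G x \<bullet> (z - x) = - (1/L) * (G x \<bullet> u)" unfolding z_def by simp
  have e3: "(norm (z - x))\<^sup>2 = (1/L)\<^sup>2 * (norm u)\<^sup>2" unfolding z_def using L
    by (simp add: power_divide)
  have e4: "G x \<bullet> u - G y \<bullet> u = (norm u)\<^sup>2" unfolding u_def
    by (simp add: inner_diff_left power2_norm_eq_inner)
  have "\<phi> y + G y \<bullet> (x - y) - (1/L) * (G y \<bullet> u) \<le> \<phi> x + (- (1/L) * (G x \<bullet> u)) + L / 2 * ((1/L)\<^sup>2 * (norm u)\<^sup>2)"
    using a b unfolding e1 e2 e3 by linarith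
  moreover have "L / 2 * ((1/L)\<^sup>2 * (norm u)\<^sup>2) = (1 / (2 * L)) * (norm u)\<^sup>2"
    using L by (simp add: power2_eq_square field_simps)
  moreover have "(1/L) * (G x \<bullet> u) - (1/L) * (G y \<bullet> u) = 2 * ((1 / (2 * L)) * (norm u)\<^sup>2)"
    using e4 by (metis right_diff_distrib times_divide_eq_left divide_divide_eq_left mult.commute mult_1 mult_2 add_divide_distrib field_sum_of_halves)
  ultimately have "\<phi> y + G y \<bullet> (x - y) \<le> \<phi> x - (1 / (2 * L)) * (norm u)\<^sup>2"
    by linarith
  hence "(1 / (2 * L)) * (norm u)\<^sup>2 \<le> \<phi> x - \<phi> y - G y \<bullet> (x - y)" by linarith
  thus ?thesis unfolding u_def using L by (simp add: field_simps)
qed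

lemma three_point:
  fixes \<phi> :: "'a::euclidean_space \<Rightarrow> real" and G :: "'a \<Rightarrow> 'a"
  assumes der: "\<And>x. (\<phi> has_derivative (\<lambda>h. G x \<bullet> h)) (at x)"
    and cv: "convex_on UNIV \<phi>" and sm: "L_smooth_grad G L"
  shows "\<phi> x - \<phi> z - L / 2 * (norm (x - y))\<^sup>2 \<le> G y \<bullet> (x - z)"
proof -
  have a: "\<phi> y + G y \<bullet> (z - y) \<le> \<phi> z" by (rule convex_gradient_ineq[OF der cv])
  have b: "\<phi> x \<le> \<phi> y + G y \<bullet> (x - y) + L / 2 * (norm (x - y))\<^sup>2" by (rule descent_lemma[OF der sm])
  have "G y \<bullet> (x - y) - G y \<bullet> (z - y) = G y \<bullet> (x - z)" by (simp add: inner_diff_right)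
  with a b show ?thesis by linarith
qed


lemma exp_pmf_of_set:
  fixes h :: "'b \<Rightarrow> 'c::{banach, second_countable_topology}"
  assumes "finite A" "A \<noteq> {}"
  shows "measure_pmf.expectation (pmf_of_set A) h = (1 / real (card A)) *\<^sub>R (\<Sum>a\<in>A. h a)"
  using assms by (subst integral_measure_pmf[of A]) (auto simp: scaleR_sum_right)

lemma exp_reindex:
  fixes h :: "'b \<Rightarrow> 'c::{banach, second_countable_topology}"
  assumes "finite A" "A \<noteq> {}" "bij_betw \<rho> A A"
  shows "measure_pmf.expectation (pmf_of_set A) (\<lambda>a. h (\<rho> a)) = measure_pmf.expectation (pmf_of_set A) h"
  using assms by (simp add: exp_pmf_of_set sum.reindex_bij_betw)

lemma fin_int:
  fixes f :: "_ \<Rightarrow> 'c::{banach, second_countable_topology}"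
  shows "finite (set_pmf p) \<Longrightarrow> integrable (measure_pmf p) f"
  by (rule integrable_measure_pmf_finite)

lemma exp_mono:
  fixes f g :: "_ \<Rightarrow> real"
  assumes "finite (set_pmf p)" "\<And>x. x \<in> set_pmf p \<Longrightarrow> f x \<le> g x"
  shows "measure_pmf.expectation p f \<le> measure_pmf.expectation p g"
  using assms by (intro integral_mono_AE fin_int) (auto simp: AE_measure_pmf_iff)

lemma exp_sum:
  fixes f :: "_ \<Rightarrow> _ \<Rightarrow> 'c::{banach, second_countable_topology}"
  assumes "finite (set_pmf p)"
  shows "measure_pmf.expectation p (\<lambda>x. \<Sum>j\<in>J. f j x) = (\<Sum>j\<in>J. measure_pmf.expectation p (f j))"
  using assms by (simp add: integral_sum fin_int)

lemma exp_bind: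
  fixes h :: "_ \<Rightarrow> 'c::{banach, second_countable_topology}"
  assumes "finite (set_pmf p)" "\<And>x. x \<in> set_pmf p \<Longrightarrow> finite (set_pmf (f x))"
  shows "measure_pmf.expectation (bind_pmf p f) h = measure_pmf.expectation p (\<lambda>x. measure_pmf.expectation (f x) h)"
proof -
  have "measure_pmf.expectation (bind_pmf p f) h = (\<Sum>a\<in>set_pmf p. pmf p a *\<^sub>R measure_pmf.expectation (f a) h)"
    by (rule pmf_expectation_bind) (use assms in auto)
  also have "\<dots> = measure_pmf.expectation p (\<lambda>x. measure_pmf.expectation (f x) h)"
    by (subst integral_measure_pmf[of "set_pmf p"]) (use assms in auto)
  finally show ?thesis .
qed

lemma transport_pair:
  fixes N :: nat
  assumes "i < N" "j < N" "i \<noteq> j" "i' < N" "j' < N" "i' \<noteq> j'"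
  shows "\<exists>\<tau>. \<tau> permutes {..<N} \<and> \<tau> i' = i \<and> \<tau> j' = j"
proof -
  define t1 where "t1 = Transposition.transpose i' i"
  define j'' where "j'' = t1 j'"
  have "j'' \<noteq> i" unfolding j''_def t1_def using assms by (auto simp: Transposition.transpose_def)
  define t2 where "t2 = Transposition.transpose j'' j"
  have p1: "t1 permutes {..<N}" unfolding t1_def using assms by (intro permutes_swap_id) auto
  have "j'' < N" unfolding j''_def using permutes_in_image[OF p1] assms by auto
  hence p2: "t2 permutes {..<N}" unfolding t2_def using assms by (intro permutes_swap_id) auto
  have "(t2 \<circ> t1) permutes {..<N}" by (rule permutes_compose[OF p1 p2])
  moreover have "(t2 \<circ> t1) i' = i" unfolding t2_def t1_def using \<open>j'' \<noteq> i\<close> assms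
    by (auto simp: Transposition.transpose_def)
  moreover have "(t2 \<circ> t1) j' = j" unfolding t2_def using \<open>j'' \<noteq> i\<close> by (simp add: j''_def[symmetric] Transposition.transpose_def)
  ultimately show ?thesis by blast
qed

lemma sym_single:
  fixes F :: "nat \<Rightarrow> 'c"
  assumes inv: "\<And>\<tau> i. \<tau> permutes {..<N} \<Longrightarrow> i < N \<Longrightarrow> F (\<tau> i) = F i"
    and "i < N" "j < N"
  shows "F i = F j"
proof -
  have "Transposition.transpose j i permutes {..<N}" using assms by (intro permutes_swap_id) auto
  from inv[OF this \<open>j < N\<close>] show ?thesis by simp
qed

lemma sym_pair:
  fixes F :: "nat \<Rightarrow> nat \<Rightarrow> 'c"
  assumes inv: "\<And>\<tau> i j. \<tau> permutes {..<N} \<Longrightarrow> i < N \<Longrightarrow> j < N \<Longrightarrow> F (\<tau> i) (\<tau> j) = F i j"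
    and "i < N" "j < N" "i \<noteq> j" "i' < N" "j' < N" "i' \<noteq> j'"
  shows "F i j = F i' j'"
proof -
  obtain \<tau> where "\<tau> permutes {..<N}" "\<tau> i' = i" "\<tau> j' = j" using transport_pair assms by blast
  with inv[of \<tau> i' j'] assms show ?thesis by auto
qed

lemma sum_single_const:
  fixes F :: "nat \<Rightarrow> 'c::real_vector"
  assumes inv: "\<And>\<tau> i. \<tau> permutes {..<N} \<Longrightarrow> i < N \<Longrightarrow> F (\<tau> i) = F i" and "i < N"
  shows "F i = (1 / real N) *\<^sub>R (\<Sum>k<N. F k)"
proof -
  have e: "F k = F i" if "k < N" for k
    by (rule sym_single[of N F k i]) (use inv that assms in auto)
  have "(\<Sum>k<N. F k) = (\<Sum>k<N. F i)" by (rule sum.cong) (use e in auto)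
  thus ?thesis using assms by (simp add: sum_constant_scaleR)
qed

lemma sum_pair_const:
  fixes F :: "nat \<Rightarrow> nat \<Rightarrow> real"
  assumes inv: "\<And>\<tau> i j. \<tau> permutes {..<N} \<Longrightarrow> i < N \<Longrightarrow> j < N \<Longrightarrow> F (\<tau> i) (\<tau> j) = F i j"
    and "i < N" "j < N" "i \<noteq> j"
  shows "F i j = ((\<Sum>p<N. \<Sum>q<N. F p q) - (\<Sum>p<N. F p p)) / (real N * (real N - 1))"
proof -
  have e: "F p q = F i j" if "p < N" "q < N" "p \<noteq> q" for p q
    by (rule sym_pair[of N F p q i j]) (use inv that assms in auto)
  have "(\<Sum>p<N. \<Sum>q<N. F p q) - (\<Sum>p<N. F p p) = (\<Sum>p<N. (\<Sum>q<N. F p q) - F p p)"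
    by (simp add: sum_subtractf)
  also have "\<dots> = (\<Sum>p<N. \<Sum>q\<in>{..<N}-{p}. F p q)"
    by (intro sum.cong refl) (simp add: sum_diff1)
  also have "\<dots> = (\<Sum>p<N. \<Sum>q\<in>{..<N}-{p}. F i j)"
    by (intro sum.cong refl) (use e in auto)
  also have "\<dots> = real N * (real N - 1) * F i j"
    using assms by (simp add: of_nat_diff)
  finally show ?thesis using assms by auto
qed

lemma perms_fin: "finite (perms n)" unfolding perms_def by (rule finite_permutations) simp
lemma perms_ne: "perms n \<noteq> {}" unfolding perms_def using permutes_id by blast
lemma set_pmf_perms[simp]: "set_pmf (pmf_of_set (perms n)) = perms n"
  using perms_fin perms_ne by simp
lemma in_set_pmf_perms[simp]: "\<pi> \<in> set_pmf (pmf_of_set (perms n)) \<longleftrightarrow> \<pi> permutes {..<n}"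
  unfolding set_pmf_perms by (simp add: perms_def)

lemma perms_right_inv:
  fixes h :: "(nat \<Rightarrow> nat) \<Rightarrow> 'c::{banach, second_countable_topology}"
  assumes "\<tau> permutes {..<n}"
  shows "measure_pmf.expectation (pmf_of_set (perms n)) (\<lambda>\<pi>. h (\<pi> \<circ> \<tau>))
       = measure_pmf.expectation (pmf_of_set (perms n)) h"
proof (rule exp_reindex[OF perms_fin perms_ne])
  have ti: "inv \<tau> permutes {..<n}" by (rule permutes_inv[OF assms])
  show "bij_betw (\<lambda>\<pi>. \<pi> \<circ> \<tau>) (perms n) (perms n)"
  proof (rule bij_betwI[where g = "\<lambda>\<pi>. \<pi> \<circ> inv \<tau>"])
    show "(\<lambda>\<pi>. \<pi> \<circ> \<tau>) \<in> perms n \<rightarrow> perms n" unfolding perms_def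
      using permutes_compose[OF assms] by auto
    show "(\<lambda>\<pi>. \<pi> \<circ> inv \<tau>) \<in> perms n \<rightarrow> perms n" unfolding perms_def
      using permutes_compose[OF ti] by auto
    show "\<pi> \<circ> \<tau> \<circ> inv \<tau> = \<pi>" for \<pi>
      by (simp add: o_assoc[symmetric] permutes_inv_o[OF assms])
    show "\<pi> \<circ> inv \<tau> \<circ> \<tau> = \<pi>" for \<pi>
      by (simp add: o_assoc[symmetric] permutes_inv_o[OF assms])
  qed
qed

lemma perm_marg:
  fixes \<phi> :: "nat \<Rightarrow> 'c::{banach, second_countable_topology}"
  assumes "j < n"
  shows "measure_pmf.expectation (pmf_of_set (perms n)) (\<lambda>\<pi>. \<phi> (\<pi> j)) = (1 / real n) *\<^sub>R (\<Sum>k<n. \<phi> k)"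
proof -
  define F where "F j = measure_pmf.expectation (pmf_of_set (perms n)) (\<lambda>\<pi>. \<phi> (\<pi> j))" for j
  have inv: "F (\<tau> i) = F i" if "\<tau> permutes {..<n}" "i < n" for \<tau> i
    unfolding F_def using perms_right_inv[OF that(1), of "\<lambda>\<pi>. \<phi> (\<pi> i)"] by simp
  have "(\<Sum>k<n. F k) = measure_pmf.expectation (pmf_of_set (perms n)) (\<lambda>\<pi>. \<Sum>k<n. \<phi> (\<pi> k))"
    unfolding F_def by (rule exp_sum[symmetric]) (simp add: perms_fin)
  also have "\<dots> = measure_pmf.expectation (pmf_of_set (perms n)) (\<lambda>\<pi>. \<Sum>k<n. \<phi> k)"
  proof (rule integral_cong_AE)
    show "AE \<pi> in measure_pmf (pmf_of_set (perms n)). (\<Sum>k<n. \<phi> (\<pi> k)) = (\<Sum>k<n. \<phi> k)"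
      unfolding AE_measure_pmf_iff set_pmf_perms
      using sum.permute[of _ "{..<n}" \<phi>] by (auto simp: comp_def perms_def)
  qed auto
  also have "\<dots> = (\<Sum>k<n. \<phi> k)" by simp
  moreover have "F j = (1 / real n) *\<^sub>R (\<Sum>k<n. F k)"
    by (rule sum_single_const) (use inv assms in auto)
  ultimately show ?thesis unfolding F_def by simp
qed

lemma perm_pair:
  fixes \<psi> :: "nat \<Rightarrow> nat \<Rightarrow> real"
  assumes "j < n" "k < n" "j \<noteq> k"
  shows "measure_pmf.expectation (pmf_of_set (perms n)) (\<lambda>\<pi>. \<psi> (\<pi> j) (\<pi> k))
     = ((\<Sum>p<n. \<Sum>q<n. \<psi> p q) - (\<Sum>p<n. \<psi> p p)) / (real n * (real n - 1))"
proof -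
  define F where "F j k = measure_pmf.expectation (pmf_of_set (perms n)) (\<lambda>\<pi>. \<psi> (\<pi> j) (\<pi> k))" for j k
  have inv: "F (\<tau> i) (\<tau> i') = F i i'" if "\<tau> permutes {..<n}" "i < n" "i' < n" for \<tau> i i'
    unfolding F_def using perms_right_inv[OF that(1), of "\<lambda>\<pi>. \<psi> (\<pi> i) (\<pi> i')"] by simp
  have pe: "AE \<pi> in measure_pmf (pmf_of_set (perms n)). \<pi> permutes {..<n}"
    unfolding AE_measure_pmf_iff set_pmf_perms by (simp add: perms_def)
  have "(\<Sum>p<n. \<Sum>q<n. F p q) = measure_pmf.expectation (pmf_of_set (perms n)) (\<lambda>\<pi>. \<Sum>p<n. \<Sum>q<n. \<psi> (\<pi> p) (\<pi> q))"
    unfolding F_def by (simp add: exp_sum perms_fin)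
  also have "\<dots> = measure_pmf.expectation (pmf_of_set (perms n)) (\<lambda>\<pi>. \<Sum>p<n. \<Sum>q<n. \<psi> p q)"
  proof (rule integral_cong_AE)
    show "AE \<pi> in measure_pmf (pmf_of_set (perms n)). (\<Sum>p<n. \<Sum>q<n. \<psi> (\<pi> p) (\<pi> q)) = (\<Sum>p<n. \<Sum>q<n. \<psi> p q)"
      using pe
    proof (rule AE_mp, intro AE_I2 impI)
      fix \<pi> assume p: "\<pi> permutes {..<n}"
      have "(\<Sum>p<n. \<Sum>q<n. \<psi> (\<pi> p) (\<pi> q)) = (\<Sum>p<n. \<Sum>q<n. \<psi> (\<pi> p) q)"
      proof (rule sum.cong[OF refl])
        fix p' show "(\<Sum>q<n. \<psi> (\<pi> p') (\<pi> q)) = (\<Sum>q<n. \<psi> (\<pi> p') q)"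
          using sum.permute[OF p, of "\<psi> (\<pi> p')"] by (simp add: comp_def)
      qed
      also have "\<dots> = (\<Sum>p<n. \<Sum>q<n. \<psi> p q)"
        using sum.permute[OF p, of "\<lambda>p. \<Sum>q<n. \<psi> p q"] by (simp add: comp_def)
      finally show "(\<Sum>p<n. \<Sum>q<n. \<psi> (\<pi> p) (\<pi> q)) = (\<Sum>p<n. \<Sum>q<n. \<psi> p q)" .
    qed
  qed auto
  finally have s1: "(\<Sum>p<n. \<Sum>q<n. F p q) = (\<Sum>p<n. \<Sum>q<n. \<psi> p q)" by simp
  have "(\<Sum>p<n. F p p) = measure_pmf.expectation (pmf_of_set (perms n)) (\<lambda>\<pi>. \<Sum>p<n. \<psi> (\<pi> p) (\<pi> p))"
    unfolding F_def by (simp add: exp_sum perms_fin)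
  also have "\<dots> = measure_pmf.expectation (pmf_of_set (perms n)) (\<lambda>\<pi>. \<Sum>p<n. \<psi> p p)"
  proof (rule integral_cong_AE)
    show "AE \<pi> in measure_pmf (pmf_of_set (perms n)). (\<Sum>p<n. \<psi> (\<pi> p) (\<pi> p)) = (\<Sum>p<n. \<psi> p p)"
      using pe by (rule AE_mp, intro AE_I2 impI) (use sum.permute[of _ "{..<n}" "\<lambda>p. \<psi> p p"] in \<open>auto simp: comp_def\<close>)
  qed auto
  finally have s2: "(\<Sum>p<n. F p p) = (\<Sum>p<n. \<psi> p p)" by simp
  have "F j k = ((\<Sum>p<n. \<Sum>q<n. F p q) - (\<Sum>p<n. F p p)) / (real n * (real n - 1))"
    by (rule sum_pair_const) (use inv assms in auto)
  thus ?thesis using s1 s2 unfolding F_def by simp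
qed

lemma norm_sq_sum:
  fixes u :: "nat \<Rightarrow> 'c::real_inner"
  shows "(norm (\<Sum>j\<in>J. u j))\<^sup>2 = (\<Sum>j\<in>J. \<Sum>k\<in>J. u j \<bullet> u k)"
  apply (simp add: power2_norm_eq_inner inner_sum_left inner_sum_right)
  apply (rule sum.swap)
  done

lemma coef_ineq:
  fixes i n :: nat and S2 B :: real
  assumes "1 \<le> i" "i < n" "S2 \<ge> 0" "B \<ge> 0"
  shows "real i * S2 / real n + (real i * real i - real i) * ((B - S2) / (real n * (real n - 1))) \<le> S2 / 2 + B"
proof -
  define I where "I = real i" define N where "N = real n"
  have I1: "1 \<le> I" and IN: "I + 1 \<le> N" using assms unfolding I_def N_def by auto
  have N2: "N \<ge> 2" using I1 IN by simp
  have pos: "N * (N - 1) > 0" using N2 by simp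
  define \<alpha> where "\<alpha> = (I * I - I) / (N * (N - 1))"
  have a0: "0 \<le> \<alpha>" unfolding \<alpha>_def using I1 pos by (intro divide_nonneg_pos) (auto simp: algebra_simps)
  have "I * (I - 1) \<le> N * (N - 1)" using I1 IN by (intro mult_mono) auto
  hence a1: "\<alpha> \<le> 1" unfolding \<alpha>_def using pos
    by (subst divide_le_eq_1_pos) (auto simp: algebra_simps)
  have b: "I / N - \<alpha> = I * (N - I) / (N * (N - 1))" unfolding \<alpha>_def using pos N2
    by (simp add: field_simps)
  have b0: "0 \<le> I / N - \<alpha>" unfolding b using IN I1 pos by simp
  have "2 * (I * (N - I)) \<le> N * (N - 1)"
  proof -
    have "0 \<le> (N - 2 * I)\<^sup>2" by simp
    hence "4 * (I * (N - I)) \<le> N * N" by (simp add: power2_eq_square algebra_simps)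
    moreover have "N * 2 \<le> N * N" using N2 by (intro mult_left_mono) auto
    hence "N * N \<le> 2 * (N * (N - 1))" by (simp add: algebra_simps)
    ultimately show ?thesis by linarith
  qed
  hence b1: "I / N - \<alpha> \<le> 1 / 2" unfolding b using pos by (simp add: field_simps)
  have "real i * S2 / real n + (real i * real i - real i) * ((B - S2) / (real n * (real n - 1)))
      = S2 * (I / N - \<alpha>) + B * \<alpha>" unfolding \<alpha>_def I_def[symmetric] N_def[symmetric]
  proof -
    have gen: "x * S2 / N + c * ((B - S2) / D) = S2 * (x / N - c / D) + B * (c / D)" for x c D :: real
      by (simp add: diff_divide_distrib algebra_simps)
    show "I * S2 / N + (I * I - I) * ((B - S2) / (N * (N - 1))) = S2 * (I / N - (I * I - I) / (N * (N - 1))) + B * ((I * I - I) / (N * (N - 1)))"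
      by (rule gen)
  qed
  also have "\<dots> \<le> S2 * (1/2) + B * 1"
    by (intro add_mono mult_left_mono) (use assms a1 b1 in auto)
  finally show ?thesis by simp
qed

lemma perm_sq:
  fixes b :: "nat \<Rightarrow> 'c::euclidean_space"
  assumes "i < n"
  shows "measure_pmf.expectation (pmf_of_set (perms n)) (\<lambda>\<pi>. (norm (\<Sum>j<i. b (\<pi> j)))\<^sup>2)
     \<le> (1/2) * (\<Sum>k<n. (norm (b k))\<^sup>2) + (norm (\<Sum>k<n. b k))\<^sup>2"
proof (cases "i = 0")
  case True thus ?thesis by (simp add: sum_nonneg)
next
  case False
  define S2 where "S2 = (\<Sum>k<n. (norm (b k))\<^sup>2)"
  define B where "B = (norm (\<Sum>k<n. b k))\<^sup>2"
  define G where "G j k = measure_pmf.expectation (pmf_of_set (perms n)) (\<lambda>\<pi>. b (\<pi> j) \<bullet> b (\<pi> k))" for j k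
  have Gd: "G j j = S2 / real n" if "j < n" for j
  proof -
    have "G j j = (1 / real n) *\<^sub>R (\<Sum>k<n. b k \<bullet> b k)"
      unfolding G_def by (rule perm_marg[OF that, of "\<lambda>p. b p \<bullet> b p"])
    thus ?thesis unfolding S2_def by (simp add: power2_norm_eq_inner)
  qed
  have Go: "G j k = (B - S2) / (real n * (real n - 1))" if "j < n" "k < n" "j \<noteq> k" for j k
  proof -
    have "G j k = ((\<Sum>p<n. \<Sum>q<n. b p \<bullet> b q) - (\<Sum>p<n. b p \<bullet> b p)) / (real n * (real n - 1))"
      unfolding G_def by (rule perm_pair[OF that, of "\<lambda>p q. b p \<bullet> b q"])
    thus ?thesis unfolding S2_def B_def norm_sq_sum by (simp add: power2_norm_eq_inner)
  qed
  have "measure_pmf.expectation (pmf_of_set (perms n)) (\<lambda>\<pi>. (norm (\<Sum>j<i. b (\<pi> j)))\<^sup>2)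
      = (\<Sum>j<i. \<Sum>k<i. G j k)"
    unfolding norm_sq_sum G_def by (simp add: exp_sum perms_fin)
  also have "\<dots> = (\<Sum>j<i. G j j + (\<Sum>k\<in>{..<i}-{j}. G j k))"
    by (intro sum.cong refl) (simp add: sum.remove[of "{..<i}"])
  also have "\<dots> = (\<Sum>j<i. S2 / real n + (\<Sum>k\<in>{..<i}-{j}. (B - S2) / (real n * (real n - 1))))"
    using assms by (intro sum.cong refl arg_cong2[where f = "(+)"]) (auto simp: Gd Go)
  also have "\<dots> = real i * S2 / real n + (real i * real i - real i) * ((B - S2) / (real n * (real n - 1)))"
    using False by (simp add: of_nat_diff algebra_simps)
  also have "\<dots> \<le> S2 / 2 + B"
    by (rule coef_ineq) (use False assms in \<open>auto simp: S2_def B_def intro: sum_nonneg\<close>)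
  finally show ?thesis unfolding S2_def B_def by simp
qed


lemma coh_fin: "finite (cohorts M C)"
  unfolding cohorts_def by (rule finite_subset[of _ "Pow {..<M}"]) auto

lemma coh_ne: "C \<le> M \<Longrightarrow> cohorts M C \<noteq> {}"
proof -
  assume "C \<le> M"
  hence "{..<C} \<in> cohorts M C" unfolding cohorts_def by auto
  thus ?thesis by blast
qed

lemma set_pmf_coh: "C \<le> M \<Longrightarrow> set_pmf (pmf_of_set (cohorts M C)) = cohorts M C"
  using coh_fin coh_ne by simp

lemma coh_inv:
  fixes h :: "nat set \<Rightarrow> 'c::{banach, second_countable_topology}"
  assumes "\<tau> permutes {..<M}" "C \<le> M"
  shows "measure_pmf.expectation (pmf_of_set (cohorts M C)) (\<lambda>S. h (\<tau> ` S))
       = measure_pmf.expectation (pmf_of_set (cohorts M C)) h"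
proof (rule exp_reindex[OF coh_fin coh_ne[OF assms(2)]])
  have ti: "inv \<tau> permutes {..<M}" by (rule permutes_inv[OF assms(1)])
  have mem: "\<sigma> ` S \<in> cohorts M C" if "\<sigma> permutes {..<M}" "S \<in> cohorts M C" for \<sigma> S
  proof -
    have "\<sigma> ` S \<subseteq> \<sigma> ` {..<M}" using that by (auto simp: cohorts_def)
    also have "\<dots> = {..<M}" by (rule permutes_image[OF that(1)])
    finally have "\<sigma> ` S \<subseteq> {..<M}" .
    moreover have "card (\<sigma> ` S) = card S"
      by (rule card_image) (use permutes_inj[OF that(1)] in \<open>auto simp: inj_on_def\<close>)
    ultimately show ?thesis using that by (auto simp: cohorts_def)
  qed
  show "bij_betw ((`) \<tau>) (cohorts M C) (cohorts M C)"
  proof (rule bij_betwI[where g = "\<lambda>S. inv \<tau> ` S"])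
    show "(`) \<tau> \<in> cohorts M C \<rightarrow> cohorts M C" using mem[OF assms(1)] by auto
    show "(`) (inv \<tau>) \<in> cohorts M C \<rightarrow> cohorts M C" using mem[OF ti] by auto
    show "inv \<tau> ` \<tau> ` S = S" for S
      by (simp add: image_comp permutes_inv_o[OF assms(1)])
    show "\<tau> ` inv \<tau> ` S = S" for S
      by (simp add: image_comp permutes_inv_o[OF assms(1)])
  qed
qed

definition ind :: "nat set \<Rightarrow> nat \<Rightarrow> real" where "ind S i = (if i \<in> S then 1 else 0)"

lemma sum_ind: "S \<subseteq> A \<Longrightarrow> finite A \<Longrightarrow> (\<Sum>i\<in>A. ind S i) = real (card S)"
  unfolding ind_def by (simp add: sum.If_cases Int_absorb1 Int_commute)

lemma ind_sq[simp]: "ind S i * ind S i = ind S i" unfolding ind_def by simp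

lemma coh_p1:
  assumes "i < M" "C \<le> M"
  shows "measure_pmf.expectation (pmf_of_set (cohorts M C)) (\<lambda>S. ind S i) = real C / real M"
proof -
  define F where "F i = measure_pmf.expectation (pmf_of_set (cohorts M C)) (\<lambda>S. ind S i)" for i
  have inv: "F (\<tau> i) = F i" if "\<tau> permutes {..<M}" "i < M" for \<tau> i
  proof -
    have "F i = measure_pmf.expectation (pmf_of_set (cohorts M C)) (\<lambda>S. ind (\<tau> ` S) (\<tau> i))"
      unfolding F_def ind_def using permutes_inj[OF that(1)] by (simp add: inj_image_mem_iff)
    also have "\<dots> = F (\<tau> i)" unfolding F_def by (rule coh_inv[OF that(1) assms(2)])
    finally show ?thesis by simp
  qed
  have "(\<Sum>k<M. F k) = measure_pmf.expectation (pmf_of_set (cohorts M C)) (\<lambda>S. \<Sum>k<M. ind S k)"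
    unfolding F_def by (rule exp_sum[symmetric]) (simp add: set_pmf_coh[OF assms(2)] coh_fin)
  also have "\<dots> = measure_pmf.expectation (pmf_of_set (cohorts M C)) (\<lambda>S. real C)"
    by (rule integral_cong_AE) (unfold AE_measure_pmf_iff set_pmf_coh[OF assms(2)], auto simp: cohorts_def sum_ind)
  also have "\<dots> = real C" by simp
  finally have s: "(\<Sum>k<M. F k) = real C" .
  have "F i = (1 / real M) *\<^sub>R (\<Sum>k<M. F k)"
    by (rule sum_single_const) (use inv assms in auto)
  thus ?thesis using s unfolding F_def by simp
qed

lemma coh_p2:
  assumes "i < M" "j < M" "i \<noteq> j" "C \<le> M"
  shows "measure_pmf.expectation (pmf_of_set (cohorts M C)) (\<lambda>S. ind S i * ind S j)
       = (real C * real C - real C) / (real M * (real M - 1))"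
proof -
  define F where "F i j = measure_pmf.expectation (pmf_of_set (cohorts M C)) (\<lambda>S. ind S i * ind S j)" for i j
  have inv: "F (\<tau> i) (\<tau> j) = F i j" if "\<tau> permutes {..<M}" "i < M" "j < M" for \<tau> i j
  proof -
    have "F i j = measure_pmf.expectation (pmf_of_set (cohorts M C)) (\<lambda>S. ind (\<tau> ` S) (\<tau> i) * ind (\<tau> ` S) (\<tau> j))"
      unfolding F_def ind_def using permutes_inj[OF that(1)] by (simp add: inj_image_mem_iff)
    also have "\<dots> = F (\<tau> i) (\<tau> j)" unfolding F_def by (rule coh_inv[OF that(1) assms(4)])
    finally show ?thesis by simp
  qed
  have "(\<Sum>p<M. \<Sum>q<M. F p q) = measure_pmf.expectation (pmf_of_set (cohorts M C)) (\<lambda>S. \<Sum>p<M. \<Sum>q<M. ind S p * ind S q)"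
    unfolding F_def by (simp add: exp_sum set_pmf_coh[OF assms(4)] coh_fin)
  also have "\<dots> = measure_pmf.expectation (pmf_of_set (cohorts M C)) (\<lambda>S. real C * real C)"
  proof (rule integral_cong_AE)
    show "AE S in measure_pmf (pmf_of_set (cohorts M C)). (\<Sum>p<M. \<Sum>q<M. ind S p * ind S q) = real C * real C"
      unfolding AE_measure_pmf_iff set_pmf_coh[OF assms(4)]
    proof
      fix S assume "S \<in> cohorts M C"
      hence S: "S \<subseteq> {..<M}" "card S = C" by (auto simp: cohorts_def)
      have "(\<Sum>p<M. \<Sum>q<M. ind S p * ind S q) = (\<Sum>p<M. ind S p * (\<Sum>q<M. ind S q))"
        by (simp add: sum_distrib_left)
      also have "\<dots> = real C * real C" using S by (simp add: sum_ind sum_distrib_right[symmetric])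
      finally show "(\<Sum>p<M. \<Sum>q<M. ind S p * ind S q) = real C * real C" .
    qed
  qed auto
  also have "\<dots> = real C * real C" by simp
  finally have s1: "(\<Sum>p<M. \<Sum>q<M. F p q) = real C * real C" .
  have "(\<Sum>p<M. F p p) = (\<Sum>p<M. real C / real M)"
    by (intro sum.cong refl) (use coh_p1[OF _ assms(4)] in \<open>auto simp: F_def\<close>)
  also have "\<dots> = real C" using assms by simp
  finally have s2: "(\<Sum>p<M. F p p) = real C" .
  have "F i j = ((\<Sum>p<M. \<Sum>q<M. F p q) - (\<Sum>p<M. F p p)) / (real M * (real M - 1))"
    by (rule sum_pair_const) (use inv assms in auto)
  thus ?thesis using s1 s2 unfolding F_def by simp
qed

lemma sum_S_ind:
  fixes a :: "nat \<Rightarrow> 'c::real_vector"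
  assumes "S \<subseteq> {..<M}"
  shows "(\<Sum>m\<in>S. a m) = (\<Sum>m<M. ind S m *\<^sub>R a m)"
proof -
  have "(\<Sum>m<M. ind S m *\<^sub>R a m) = (\<Sum>m\<in>{..<M} \<inter> S. a m)"
    unfolding ind_def by (simp add: sum.If_cases if_distrib[of "\<lambda>c. c *\<^sub>R _"])
  thus ?thesis using assms by (simp add: Int_absorb1)
qed

lemma coh_mean:
  fixes a :: "nat \<Rightarrow> 'c::{banach, second_countable_topology}"
  assumes "C \<le> M"
  shows "measure_pmf.expectation (pmf_of_set (cohorts M C)) (\<lambda>S. \<Sum>m\<in>S. a m) = (real C / real M) *\<^sub>R (\<Sum>m<M. a m)"
proof -
  have "measure_pmf.expectation (pmf_of_set (cohorts M C)) (\<lambda>S. \<Sum>m\<in>S. a m)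
      = measure_pmf.expectation (pmf_of_set (cohorts M C)) (\<lambda>S. \<Sum>m<M. ind S m *\<^sub>R a m)"
    by (rule integral_cong_AE) (unfold AE_measure_pmf_iff set_pmf_coh[OF assms], auto simp: cohorts_def sum_S_ind)
  also have "\<dots> = (\<Sum>m<M. measure_pmf.expectation (pmf_of_set (cohorts M C)) (\<lambda>S. ind S m) *\<^sub>R a m)"
    by (simp add: exp_sum set_pmf_coh[OF assms] coh_fin) (intro sum.cong refl integral_scaleR_left fin_int, simp add: set_pmf_coh[OF assms] coh_fin)
  also have "\<dots> = (\<Sum>m<M. (real C / real M) *\<^sub>R a m)"
    by (intro sum.cong refl) (simp add: coh_p1[OF _ assms])
  finally show ?thesis by (simp add: scaleR_sum_right)
qed

lemma cohorts_1: "cohorts (Suc 0) (Suc 0) = {{0}}"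
  unfolding cohorts_def by (auto simp: card_1_singleton_iff)

lemma coh_var_ineq:
  fixes C M :: nat and S2 B :: real
  assumes "1 \<le> C" "C \<le> M" "2 \<le> M" "S2 \<ge> 0" "B \<ge> 0"
  shows "(1 / (real C)\<^sup>2) * (real C / real M * S2 + (real C * real C - real C) / (real M * (real M - 1)) * (B - S2))
      \<le> B / (real M)\<^sup>2 + real (M - C) / (real C * real (max (M - 1) 1)) * (S2 / real M)"
proof -
  define c where "c = real C" define m where "m = real M"
  have c1: "1 \<le> c" and cm: "c \<le> m" and m2: "2 \<le> m" using assms unfolding c_def m_def by auto
  have mx: "real (max (M - 1) 1) = m - 1" using assms unfolding m_def by (simp add: max_absorb1 of_nat_diff)
  have mc: "real (M - C) = m - c" using assms unfolding m_def c_def by (simp add: of_nat_diff)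
  have eq: "(1 / c\<^sup>2) * (c / m * S2 + (c * c - c) / (m * (m - 1)) * (B - S2))
      = (m - c) / (c * (m - 1)) * (S2 / m) + B * ((c - 1) / (c * m * (m - 1)))"
  proof -
    define u where "u = 1 / c" define v where "v = 1 / m" define w where "w = 1 / (m - 1)"
    have r: "u * c = 1" "v * m = 1" "w * (m - 1) = 1" using c1 m2 unfolding u_def v_def w_def by auto
    have l: "(1 / c\<^sup>2) * (c / m * S2 + (c * c - c) / (m * (m - 1)) * (B - S2)) = u * u * (c * v * S2 + (c * c - c) * (v * w) * (B - S2))"
      unfolding u_def v_def w_def by (simp add: field_simps power2_eq_square)
    have rr: "(m - c) / (c * (m - 1)) * (S2 / m) + B * ((c - 1) / (c * m * (m - 1))) = (m - c) * (u * w) * (S2 * v) + B * ((c - 1) * (u * v * w))"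
      unfolding u_def v_def w_def by (simp add: field_simps)
    show ?thesis unfolding l rr using r by algebra
  qed
  have "(c - 1) * (m * m) \<le> (c * m * (m - 1)) * 1"
  proof -
    have "(c - 1) * m \<le> c * (m - 1)" using cm by (simp add: algebra_simps)
    hence "(c - 1) * m * m \<le> c * (m - 1) * m" using m2 by (intro mult_right_mono) auto
    thus ?thesis by (simp add: algebra_simps)
  qed
  hence "(c - 1) / (c * m * (m - 1)) \<le> 1 / (m * m)"
    using c1 m2 by (simp add: field_simps)
  hence "B * ((c - 1) / (c * m * (m - 1))) \<le> B * (1 / (m * m))"
    using assms by (intro mult_left_mono) auto
  thus ?thesis unfolding c_def[symmetric] m_def[symmetric] mx mc eq
    by (simp add: power2_eq_square)
qed

lemma coh_var:
  fixes w :: "nat \<Rightarrow> 'c::euclidean_space"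
  assumes "1 \<le> C" "C \<le> M"
  shows "measure_pmf.expectation (pmf_of_set (cohorts M C)) (\<lambda>S. (norm ((1 / real C) *\<^sub>R (\<Sum>m\<in>S. w m)))\<^sup>2)
     \<le> (norm ((1 / real M) *\<^sub>R (\<Sum>m<M. w m)))\<^sup>2
       + real (M - C) / (real C * real (max (M - 1) 1)) * ((1 / real M) * (\<Sum>m<M. (norm (w m))\<^sup>2))"
proof (cases "M = 1")
  case True
  hence "C = 1" using assms by simp
  thus ?thesis using True by (simp add: cohorts_1 pmf_of_set_singleton)
next
  case False
  hence M2: "2 \<le> M" using assms by simp
  define S2 where "S2 = (\<Sum>k<M. (norm (w k))\<^sup>2)"
  define B where "B = (norm (\<Sum>k<M. w k))\<^sup>2"
  define p2 where "p2 = (real C * real C - real C) / (real M * (real M - 1))"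
  define G where "G p q = measure_pmf.expectation (pmf_of_set (cohorts M C)) (\<lambda>S. ind S p * ind S q) * (w p \<bullet> w q)" for p q
  have "measure_pmf.expectation (pmf_of_set (cohorts M C)) (\<lambda>S. (norm ((1 / real C) *\<^sub>R (\<Sum>m\<in>S. w m)))\<^sup>2)
     = measure_pmf.expectation (pmf_of_set (cohorts M C)) (\<lambda>S. (1 / (real C)\<^sup>2) * (\<Sum>p<M. \<Sum>q<M. ind S p * ind S q * (w p \<bullet> w q)))"
  proof (rule integral_cong_AE)
    show "AE S in measure_pmf (pmf_of_set (cohorts M C)). (norm ((1 / real C) *\<^sub>R (\<Sum>m\<in>S. w m)))\<^sup>2 = (1 / (real C)\<^sup>2) * (\<Sum>p<M. \<Sum>q<M. ind S p * ind S q * (w p \<bullet> w q))"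
      unfolding AE_measure_pmf_iff set_pmf_coh[OF assms(2)]
    proof
      fix S assume "S \<in> cohorts M C"
      hence "S \<subseteq> {..<M}" by (auto simp: cohorts_def)
      hence "(\<Sum>m\<in>S. w m) = (\<Sum>m<M. ind S m *\<^sub>R w m)" by (rule sum_S_ind)
      thus "(norm ((1 / real C) *\<^sub>R (\<Sum>m\<in>S. w m)))\<^sup>2 = (1 / (real C)\<^sup>2) * (\<Sum>p<M. \<Sum>q<M. ind S p * ind S q * (w p \<bullet> w q))"
        by (simp add: norm_sq_sum power_mult_distrib mult_ac power_divide)
    qed
  qed auto
  also have "\<dots> = (1 / (real C)\<^sup>2) * (\<Sum>p<M. \<Sum>q<M. G p q)"
    unfolding G_def by (simp add: exp_sum set_pmf_coh[OF assms(2)] coh_fin)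
  also have "(\<Sum>p<M. \<Sum>q<M. G p q) = (\<Sum>p<M. G p p + (\<Sum>q\<in>{..<M}-{p}. G p q))"
    by (intro sum.cong refl) (simp add: sum.remove[of "{..<M}"])
  also have "\<dots> = (\<Sum>p<M. real C / real M * (w p \<bullet> w p) + (\<Sum>q\<in>{..<M}-{p}. p2 * (w p \<bullet> w q)))"
    using assms unfolding G_def p2_def
    by (intro sum.cong refl arg_cong2[where f = "(+)"]) (auto simp: coh_p1 coh_p2)
  also have "\<dots> = real C / real M * S2 + p2 * (B - S2)"
  proof -
    have "(\<Sum>p<M. (\<Sum>q\<in>{..<M}-{p}. p2 * (w p \<bullet> w q))) = p2 * (\<Sum>p<M. (\<Sum>q<M. w p \<bullet> w q) - w p \<bullet> w p)"
      by (simp add: sum_distrib_left sum_diff1 right_diff_distrib)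
    also have "\<dots> = p2 * (B - S2)"
      unfolding B_def S2_def norm_sq_sum by (simp add: sum_subtractf power2_norm_eq_inner)
    finally show ?thesis
      by (simp add: sum.distrib S2_def power2_norm_eq_inner sum_distrib_left)
  qed
  finally have "measure_pmf.expectation (pmf_of_set (cohorts M C)) (\<lambda>S. (norm ((1 / real C) *\<^sub>R (\<Sum>m\<in>S. w m)))\<^sup>2)
     = (1 / (real C)\<^sup>2) * (real C / real M * S2 + p2 * (B - S2))" .
  also have "\<dots> \<le> B / (real M)\<^sup>2 + real (M - C) / (real C * real (max (M - 1) 1)) * (S2 / real M)"
    unfolding p2_def by (rule coh_var_ineq) (use assms M2 in \<open>auto simp: S2_def B_def intro: sum_nonneg\<close>)
  also have "\<dots> = (norm ((1 / real M) *\<^sub>R (\<Sum>m<M. w m)))\<^sup>2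
       + real (M - C) / (real C * real (max (M - 1) 1)) * ((1 / real M) * (\<Sum>m<M. (norm (w m))\<^sup>2))"
    unfolding B_def S2_def by (simp add: power_mult_distrib power_divide)
  finally show ?thesis .
qed


lemma Pi_fin: "finite S \<Longrightarrow> finite (set_pmf Q) \<Longrightarrow> finite (set_pmf (Pi_pmf S d (\<lambda>_. Q)))"
  by (simp add: set_Pi_pmf finite_PiE_dflt)

lemma Pi_comp:
  fixes h :: "'b \<Rightarrow> 'c::{banach, second_countable_topology}"
  assumes "finite S" "m \<in> S"
  shows "measure_pmf.expectation (Pi_pmf S d (\<lambda>_. Q)) (\<lambda>\<pi>. h (\<pi> m)) = measure_pmf.expectation Q h"
proof -
  have "measure_pmf.expectation (Pi_pmf S d (\<lambda>_. Q)) (\<lambda>\<pi>. h (\<pi> m))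
      = measure_pmf.expectation (map_pmf (\<lambda>\<pi>. \<pi> m) (Pi_pmf S d (\<lambda>_. Q))) h"
    by simp
  also have "map_pmf (\<lambda>\<pi>. \<pi> m) (Pi_pmf S d (\<lambda>_. Q)) = Q"
    using Pi_pmf_component[OF assms(1), of m d "\<lambda>_. Q"] assms(2) by simp
  finally show ?thesis .
qed

lemma Pi_mean:
  fixes u :: "'i \<Rightarrow> 'b \<Rightarrow> 'c::{banach, second_countable_topology}"
  assumes "finite S" "finite (set_pmf Q)"
  shows "measure_pmf.expectation (Pi_pmf S d (\<lambda>_. Q)) (\<lambda>\<pi>. \<Sum>m\<in>S. u m (\<pi> m))
       = (\<Sum>m\<in>S. measure_pmf.expectation Q (u m))"
  using assms by (simp add: exp_sum Pi_fin Pi_comp)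

lemma nsq_add: "(norm (v + r))\<^sup>2 = (norm v)\<^sup>2 + 2 * (v \<bullet> r) + (norm (r::'c::real_inner))\<^sup>2"
  by (simp add: power2_norm_eq_inner inner_add_left inner_add_right inner_commute)

lemma Pi_sq:
  fixes u :: "'i \<Rightarrow> 'b \<Rightarrow> 'c::euclidean_space"
  assumes "finite S" "finite (set_pmf Q)"
  shows "measure_pmf.expectation (Pi_pmf S d (\<lambda>_. Q)) (\<lambda>\<pi>. (norm (\<Sum>m\<in>S. u m (\<pi> m)))\<^sup>2)
       = (norm (\<Sum>m\<in>S. measure_pmf.expectation Q (u m)))\<^sup>2
         + (\<Sum>m\<in>S. measure_pmf.expectation Q (\<lambda>p. (norm (u m p))\<^sup>2) - (norm (measure_pmf.expectation Q (u m)))\<^sup>2)"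
  using assms(1)
proof (induction S rule: finite_induct)
  case empty thus ?case by simp
next
  case (insert a S)
  define w where "w m = measure_pmf.expectation Q (u m)" for m
  define R where "R f = (\<Sum>m\<in>S. u m (f m))" for f
  have fQ: "finite (set_pmf Q)" by (rule assms(2))
  have fP: "finite (set_pmf (Pi_pmf S d (\<lambda>_. Q)))" by (rule Pi_fin[OF insert(1) fQ])
  have sumeq: "(\<Sum>m\<in>insert a S. u m ((f(a := y)) m)) = u a y + R f" for f y
  proof -
    have "(\<Sum>m\<in>S. u m ((f(a := y)) m)) = R f" unfolding R_def
      by (intro sum.cong refl) (use insert(2) in auto)
    thus ?thesis using insert(1,2) by simp
  qed
  have sumeq': "(\<Sum>m\<in>insert a S. u m (if m = a then y else f m)) = u a y + R f" for f y
    using sumeq[of f y] by (simp add: fun_upd_def)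
  have meanR: "measure_pmf.expectation (Pi_pmf S d (\<lambda>_. Q)) R = (\<Sum>m\<in>S. w m)"
    unfolding R_def w_def by (rule Pi_mean[OF insert(1) fQ])
  have "measure_pmf.expectation (Pi_pmf (insert a S) d (\<lambda>_. Q)) (\<lambda>\<pi>. (norm (\<Sum>m\<in>insert a S. u m (\<pi> m)))\<^sup>2)
      = measure_pmf.expectation Q (\<lambda>y. measure_pmf.expectation (Pi_pmf S d (\<lambda>_. Q)) (\<lambda>f. (norm (u a y + R f))\<^sup>2))"
  proof -
    have e: "Pi_pmf (insert a S) d (\<lambda>_. Q) = Q \<bind> (\<lambda>y. map_pmf (\<lambda>f. f(a := y)) (Pi_pmf S d (\<lambda>_. Q)))"
      unfolding Pi_pmf_insert'[OF insert(1,2)] by (simp add: map_pmf_def)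
    show ?thesis unfolding e
      by (subst exp_bind) (use fQ fP in \<open>auto simp: sumeq'\<close>)
  qed
  also have "\<dots> = measure_pmf.expectation Q (\<lambda>y. (norm (u a y))\<^sup>2 + 2 * (u a y \<bullet> (\<Sum>m\<in>S. w m))
        + measure_pmf.expectation (Pi_pmf S d (\<lambda>_. Q)) (\<lambda>f. (norm (R f))\<^sup>2))"
  proof (rule Bochner_Integration.integral_cong[OF refl])
    fix y
    have "measure_pmf.expectation (Pi_pmf S d (\<lambda>_. Q)) (\<lambda>f. (norm (u a y + R f))\<^sup>2)
        = measure_pmf.expectation (Pi_pmf S d (\<lambda>_. Q)) (\<lambda>f. (norm (u a y))\<^sup>2 + 2 * (u a y \<bullet> R f) + (norm (R f))\<^sup>2)"
      by (simp only: nsq_add)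
    also have "\<dots> = (norm (u a y))\<^sup>2 + 2 * (u a y \<bullet> measure_pmf.expectation (Pi_pmf S d (\<lambda>_. Q)) R)
        + measure_pmf.expectation (Pi_pmf S d (\<lambda>_. Q)) (\<lambda>f. (norm (R f))\<^sup>2)"
      using fP by (simp add: fin_int)
    finally show "measure_pmf.expectation (Pi_pmf S d (\<lambda>_. Q)) (\<lambda>f. (norm (u a y + R f))\<^sup>2)
      = (norm (u a y))\<^sup>2 + 2 * (u a y \<bullet> (\<Sum>m\<in>S. w m)) + measure_pmf.expectation (Pi_pmf S d (\<lambda>_. Q)) (\<lambda>f. (norm (R f))\<^sup>2)"
      by (simp add: meanR)
  qed
  also have "\<dots> = measure_pmf.expectation Q (\<lambda>y. (norm (u a y))\<^sup>2) + 2 * (w a \<bullet> (\<Sum>m\<in>S. w m))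
        + measure_pmf.expectation (Pi_pmf S d (\<lambda>_. Q)) (\<lambda>f. (norm (R f))\<^sup>2)"
    using fQ by (simp add: fin_int w_def)
  also have "measure_pmf.expectation (Pi_pmf S d (\<lambda>_. Q)) (\<lambda>f. (norm (R f))\<^sup>2)
      = (norm (\<Sum>m\<in>S. w m))\<^sup>2 + (\<Sum>m\<in>S. measure_pmf.expectation Q (\<lambda>p. (norm (u m p))\<^sup>2) - (norm (w m))\<^sup>2)"
    unfolding R_def w_def by (rule insert(3))
  finally show ?case using insert(1,2)
    by (simp add: w_def[symmetric] power2_norm_eq_inner inner_add_left inner_add_right inner_commute algebra_simps)
qed


lemma norm_sum_sq_le:
  fixes u :: "'i \<Rightarrow> 'c::real_normed_vector"
  shows "(norm (\<Sum>j\<in>J. u j))\<^sup>2 \<le> real (card J) * (\<Sum>j\<in>J. (norm (u j))\<^sup>2)"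
proof -
  have "norm (\<Sum>j\<in>J. u j) \<le> (\<Sum>j\<in>J. norm (u j))" by (rule norm_sum)
  hence "(norm (\<Sum>j\<in>J. u j))\<^sup>2 \<le> (\<Sum>j\<in>J. norm (u j))\<^sup>2" by (intro power_mono) auto
  also have "\<dots> \<le> (\<Sum>j\<in>J. (norm (u j))\<^sup>2) * card J" by (rule sum_squared_le_sum_of_squares)
  finally show ?thesis by (simp add: mult.commute)
qed

lemma norm_avg_sq_le:
  fixes u :: "nat \<Rightarrow> 'c::real_normed_vector"
  shows "(norm ((1 / real N) *\<^sub>R (\<Sum>j<N. u j)))\<^sup>2 \<le> (1 / real N) * (\<Sum>j<N. (norm (u j))\<^sup>2)"
proof (cases "N = 0")
  case True thus ?thesis by simp
next
  case False
  have "(norm ((1 / real N) *\<^sub>R (\<Sum>j<N. u j)))\<^sup>2 = (1 / real N)\<^sup>2 * (norm (\<Sum>j<N. u j))\<^sup>2"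
    by (simp add: power_divide)
  also have "\<dots> \<le> (1 / real N)\<^sup>2 * (real N * (\<Sum>j<N. (norm (u j))\<^sup>2))"
    using norm_sum_sq_le[of u "{..<N}"] by (intro mult_left_mono) auto
  also have "\<dots> = (1 / real N) * (\<Sum>j<N. (norm (u j))\<^sup>2)" using False by (simp add: power2_eq_square)
  finally show ?thesis .
qed

lemma young_a: "(norm (a + b))\<^sup>2 \<le> 5/4 * (norm a)\<^sup>2 + 5 * (norm (b::'c::real_inner))\<^sup>2"
proof -
  have "0 \<le> (norm ((1/2) *\<^sub>R a - 2 *\<^sub>R b))\<^sup>2" by simp
  hence "0 \<le> 1/4 * (norm a)\<^sup>2 - 2 * (a \<bullet> b) + 4 * (norm b)\<^sup>2"
    by (simp add: power2_norm_eq_inner inner_diff_left inner_diff_right inner_commute algebra_simps)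
  thus ?thesis by (simp add: nsq_add)
qed

lemma young_2: "(norm (a + b))\<^sup>2 \<le> 2 * (norm a)\<^sup>2 + 2 * (norm (b::'c::real_inner))\<^sup>2"
proof -
  have "0 \<le> (norm (a - b))\<^sup>2" by simp
  hence "0 \<le> (norm a)\<^sup>2 - 2 * (a \<bullet> b) + (norm b)\<^sup>2"
    by (simp add: power2_norm_eq_inner inner_diff_left inner_diff_right inner_commute algebra_simps)
  thus ?thesis by (simp add: nsq_add)
qed

lemma local_iter_diff:
  "local_iter g \<gamma> m \<pi> x i = x - \<gamma> *\<^sub>R (\<Sum>j<i. g m (\<pi> j) (local_iter g \<gamma> m \<pi> x j))"
  by (induction i) (simp_all add: Let_def algebra_simps)

lemma epoch_v:
  assumes "\<gamma> > 0" "n \<ge> 1"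
  shows "(1 / (\<gamma> * real n)) *\<^sub>R (x - local_iter g \<gamma> m \<pi> x n)
       = (1 / real n) *\<^sub>R (\<Sum>i<n. g m (\<pi> i) (local_iter g \<gamma> m \<pi> x i))"
  using assms by (subst local_iter_diff) simp


locale nset =
  fixes f :: "nat \<Rightarrow> nat \<Rightarrow> 'a::euclidean_space \<Rightarrow> real" and g :: "nat \<Rightarrow> nat \<Rightarrow> 'a \<Rightarrow> 'a"
    and M n :: nat and L :: real
  assumes n1: "n \<ge> 1" and M1: "M \<ge> 1"
    and grad: "\<And>m i x. m < M \<Longrightarrow> i < n \<Longrightarrow> (f m i has_derivative (\<lambda>h. g m i x \<bullet> h)) (at x)"
    and cvx: "\<And>m i. m < M \<Longrightarrow> i < n \<Longrightarrow> convex_on UNIV (f m i)"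
    and smooth: "\<And>m i. m < M \<Longrightarrow> i < n \<Longrightarrow> L_smooth_grad (g m i) L"
    and Lpos: "L > 0"
begin

definition breg where "breg m k x z = f m k x - f m k z - g m k z \<bullet> (x - z)"
definition gm where "gm m x = (1 / real n) *\<^sub>R (\<Sum>k<n. g m k x)"
definition fm where "fm m x = (1 / real n) * (\<Sum>k<n. f m k x)"
definition Dm where "Dm m x z = (1 / real n) * (\<Sum>k<n. breg m k x z)"

lemma coco: "m < M \<Longrightarrow> k < n \<Longrightarrow> (norm (g m k x - g m k z))\<^sup>2 \<le> 2 * L * breg m k x z"
  unfolding breg_def by (rule cocoercive[OF grad cvx smooth Lpos])

lemma breg_nonneg: "m < M \<Longrightarrow> k < n \<Longrightarrow> 0 \<le> breg m k x z"
proof -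
  assume a: "m < M" "k < n"
  have "0 \<le> 2 * L * breg m k x z" by (rule order_trans[OF zero_le_power2 coco[OF a]])
  thus ?thesis using Lpos by (simp add: zero_le_mult_iff)
qed

lemma Dm_nonneg: "m < M \<Longrightarrow> 0 \<le> Dm m x z"
  unfolding Dm_def by (intro mult_nonneg_nonneg sum_nonneg) (auto intro: breg_nonneg)

lemma sum_grad_diff: "m < M \<Longrightarrow> (\<Sum>k<n. (norm (g m k x - g m k z))\<^sup>2) \<le> 2 * L * (real n * Dm m x z)"
proof -
  assume m: "m < M"
  have "(\<Sum>k<n. (norm (g m k x - g m k z))\<^sup>2) \<le> (\<Sum>k<n. 2 * L * breg m k x z)"
    by (intro sum_mono coco m) simp
  also have "\<dots> = 2 * L * (real n * Dm m x z)" unfolding Dm_def using n1 by (simp add: sum_distrib_left)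
  finally show ?thesis .
qed

definition "vv m \<pi> \<gamma> x = (1 / (\<gamma> * real n)) *\<^sub>R (x - local_iter g \<gamma> m \<pi> x n)"
definition "VV m \<pi> \<gamma> x = (1 / real n) * (\<Sum>i<n. (norm (local_iter g \<gamma> m \<pi> x i - x))\<^sup>2)"

context
  fixes m :: nat and \<pi> :: "nat \<Rightarrow> nat" and \<gamma> :: real and x xs :: 'a
  assumes m: "m < M" and \<pi>: "\<pi> permutes {..<n}" and \<gamma>: "\<gamma> > 0"
begin

abbreviation "y i \<equiv> local_iter g \<gamma> m \<pi> x i"

lemma pi_lt: "i < n \<Longrightarrow> \<pi> i < n"
  using permutes_in_image[OF \<pi>] by auto

lemma vv_eq: "vv m \<pi> \<gamma> x = (1 / real n) *\<^sub>R (\<Sum>i<n. g m (\<pi> i) (y i))"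
  unfolding vv_def using epoch_v[OF \<gamma> n1] .

lemma reidx: "(\<Sum>i<n. h (\<pi> i)) = (\<Sum>k<n. h k)"
  using sum.permute[OF \<pi>, of h] by (simp add: comp_def)

lemma VV_nonneg: "0 \<le> VV m \<pi> \<gamma> x" unfolding VV_def by (simp add: sum_nonneg)

lemma C2: "(norm (vv m \<pi> \<gamma> x - gm m x))\<^sup>2 \<le> L\<^sup>2 * VV m \<pi> \<gamma> x"
proof -
  have "vv m \<pi> \<gamma> x - gm m x = (1 / real n) *\<^sub>R (\<Sum>i<n. g m (\<pi> i) (y i) - g m (\<pi> i) x)"
    unfolding vv_eq gm_def reidx[of "\<lambda>k. g m k x", symmetric]
    by (simp add: sum_subtractf scaleR_diff_right)
  hence "(norm (vv m \<pi> \<gamma> x - gm m x))\<^sup>2 \<le> (1 / real n) * (\<Sum>i<n. (norm (g m (\<pi> i) (y i) - g m (\<pi> i) x))\<^sup>2)"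
    using norm_avg_sq_le by metis
  also have "\<dots> \<le> (1 / real n) * (\<Sum>i<n. L\<^sup>2 * (norm (y i - x))\<^sup>2)"
  proof (intro mult_left_mono sum_mono)
    fix i assume "i \<in> {..<n}"
    hence "norm (g m (\<pi> i) (y i) - g m (\<pi> i) x) \<le> L * norm (y i - x)"
      using smooth[OF m pi_lt] unfolding L_smooth_grad_def by auto
    hence "(norm (g m (\<pi> i) (y i) - g m (\<pi> i) x))\<^sup>2 \<le> (L * norm (y i - x))\<^sup>2"
      by (intro power_mono) auto
    thus "(norm (g m (\<pi> i) (y i) - g m (\<pi> i) x))\<^sup>2 \<le> L\<^sup>2 * (norm (y i - x))\<^sup>2"
      by (simp add: power_mult_distrib)
  qed simp
  also have "\<dots> = L\<^sup>2 * VV m \<pi> \<gamma> x" unfolding VV_def by (simp add: sum_distrib_left)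
  finally show ?thesis .
qed

lemma C3: "fm m x - fm m xs - L / 2 * VV m \<pi> \<gamma> x \<le> vv m \<pi> \<gamma> x \<bullet> (x - xs)"
proof -
  have "(\<Sum>i<n. f m (\<pi> i) x - f m (\<pi> i) xs - L / 2 * (norm (x - y i))\<^sup>2) \<le> (\<Sum>i<n. g m (\<pi> i) (y i) \<bullet> (x - xs))"
    by (intro sum_mono three_point[OF grad cvx smooth]) (auto intro: m pi_lt)
  hence "(1 / real n) * (\<Sum>i<n. f m (\<pi> i) x - f m (\<pi> i) xs - L / 2 * (norm (x - y i))\<^sup>2) \<le> (1 / real n) * (\<Sum>i<n. g m (\<pi> i) (y i) \<bullet> (x - xs))"
    by (intro mult_left_mono) auto
  moreover have "(\<Sum>i<n. f m (\<pi> i) x - f m (\<pi> i) xs - L / 2 * (norm (x - y i))\<^sup>2)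
      = (\<Sum>k<n. f m k x) - (\<Sum>k<n. f m k xs) - L / 2 * (\<Sum>i<n. (norm (y i - x))\<^sup>2)"
    by (simp add: sum_subtractf sum_distrib_left reidx[of "\<lambda>k. f m k x"] reidx[of "\<lambda>k. f m k xs"] norm_minus_commute)
  ultimately show ?thesis unfolding vv_eq fm_def VV_def
    by (simp add: inner_sum_left right_diff_distrib diff_divide_distrib)
qed

lemma C1_pt:
  assumes i: "i < n"
  shows "(norm (y i - x))\<^sup>2 \<le> \<gamma>\<^sup>2 * (5/4 * (norm (\<Sum>j<i. g m (\<pi> j) xs))\<^sup>2
           + 10 * ((real n)\<^sup>2 * L\<^sup>2 * VV m \<pi> \<gamma> x) + 10 * (2 * L * (real n)\<^sup>2 * Dm m x xs))"
proof -
  define T1 where "T1 = (\<Sum>j<i. g m (\<pi> j) (y j) - g m (\<pi> j) x)"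
  define T2 where "T2 = (\<Sum>j<i. g m (\<pi> j) x - g m (\<pi> j) xs)"
  define T3 where "T3 = (\<Sum>j<i. g m (\<pi> j) xs)"
  have "y i - x = - \<gamma> *\<^sub>R (T3 + (T1 + T2))"
    by (subst local_iter_diff) (simp add: T1_def T2_def T3_def sum_subtractf)
  hence "(norm (y i - x))\<^sup>2 = \<gamma>\<^sup>2 * (norm (T3 + (T1 + T2)))\<^sup>2"
    by (simp add: power_mult_distrib)
  also have "\<dots> \<le> \<gamma>\<^sup>2 * (5/4 * (norm T3)\<^sup>2 + 5 * (2 * (norm T1)\<^sup>2 + 2 * (norm T2)\<^sup>2))"
    using young_a[of T3 "T1 + T2"] young_2[of T1 T2] by (intro mult_left_mono) auto
  also have "\<dots> \<le> \<gamma>\<^sup>2 * (5/4 * (norm T3)\<^sup>2 + 10 * ((real n)\<^sup>2 * L\<^sup>2 * VV m \<pi> \<gamma> x) + 10 * (2 * L * (real n)\<^sup>2 * Dm m x xs))"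
  proof -
    have iN: "real i \<le> real n" using i by simp
    have "(norm T1)\<^sup>2 \<le> real i * (\<Sum>j<i. (norm (g m (\<pi> j) (y j) - g m (\<pi> j) x))\<^sup>2)"
      unfolding T1_def using norm_sum_sq_le[of _ "{..<i}"] by simp
    also have "\<dots> \<le> real n * (\<Sum>j<n. (norm (g m (\<pi> j) (y j) - g m (\<pi> j) x))\<^sup>2)"
      using i by (intro mult_mono iN sum_mono2) (auto intro: sum_nonneg)
    also have "\<dots> \<le> real n * (\<Sum>j<n. L\<^sup>2 * (norm (y j - x))\<^sup>2)"
    proof (intro mult_left_mono sum_mono)
      fix j assume "j \<in> {..<n}"
      hence "norm (g m (\<pi> j) (y j) - g m (\<pi> j) x) \<le> L * norm (y j - x)"
        using smooth[OF m pi_lt] unfolding L_smooth_grad_def by auto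
      hence "(norm (g m (\<pi> j) (y j) - g m (\<pi> j) x))\<^sup>2 \<le> (L * norm (y j - x))\<^sup>2"
        by (intro power_mono) auto
      thus "(norm (g m (\<pi> j) (y j) - g m (\<pi> j) x))\<^sup>2 \<le> L\<^sup>2 * (norm (y j - x))\<^sup>2"
        by (simp add: power_mult_distrib)
    qed simp
    also have "\<dots> = (real n)\<^sup>2 * L\<^sup>2 * VV m \<pi> \<gamma> x" unfolding VV_def using n1
      by (simp add: sum_distrib_left power2_eq_square mult.assoc)
    finally have h1: "(norm T1)\<^sup>2 \<le> (real n)\<^sup>2 * L\<^sup>2 * VV m \<pi> \<gamma> x" .
    have "(norm T2)\<^sup>2 \<le> real i * (\<Sum>j<i. (norm (g m (\<pi> j) x - g m (\<pi> j) xs))\<^sup>2)"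
      unfolding T2_def using norm_sum_sq_le[of _ "{..<i}"] by simp
    also have "\<dots> \<le> real n * (\<Sum>j<n. (norm (g m (\<pi> j) x - g m (\<pi> j) xs))\<^sup>2)"
      using i by (intro mult_mono iN sum_mono2) (auto intro: sum_nonneg)
    also have "(\<Sum>j<n. (norm (g m (\<pi> j) x - g m (\<pi> j) xs))\<^sup>2) = (\<Sum>k<n. (norm (g m k x - g m k xs))\<^sup>2)"
      by (rule reidx)
    also have "real n * \<dots> \<le> real n * (2 * L * (real n * Dm m x xs))"
      by (intro mult_left_mono sum_grad_diff m) simp
    also have "\<dots> = 2 * L * (real n)\<^sup>2 * Dm m x xs" by (simp add: power2_eq_square)
    finally have h2: "(norm T2)\<^sup>2 \<le> 2 * L * (real n)\<^sup>2 * Dm m x xs" .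
    show ?thesis using h1 h2 by (intro mult_left_mono) auto
  qed
  finally show ?thesis unfolding T3_def .
qed

lemma C1:
  "VV m \<pi> \<gamma> x \<le> 5/4 * \<gamma>\<^sup>2 * ((1 / real n) * (\<Sum>i<n. (norm (\<Sum>j<i. g m (\<pi> j) xs))\<^sup>2))
      + 10 * (\<gamma> * real n * L)\<^sup>2 * VV m \<pi> \<gamma> x + 20 * \<gamma>\<^sup>2 * L * (real n)\<^sup>2 * Dm m x xs"
proof -
  have "VV m \<pi> \<gamma> x = (1 / real n) * (\<Sum>i<n. (norm (y i - x))\<^sup>2)" by (rule VV_def)
  also have "\<dots> \<le> (1 / real n) * (\<Sum>i<n. \<gamma>\<^sup>2 * (5/4 * (norm (\<Sum>j<i. g m (\<pi> j) xs))\<^sup>2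
           + 10 * ((real n)\<^sup>2 * L\<^sup>2 * VV m \<pi> \<gamma> x) + 10 * (2 * L * (real n)\<^sup>2 * Dm m x xs)))"
    by (intro mult_left_mono sum_mono C1_pt) auto
  also have "\<dots> = 5/4 * \<gamma>\<^sup>2 * ((1 / real n) * (\<Sum>i<n. (norm (\<Sum>j<i. g m (\<pi> j) xs))\<^sup>2))
      + 10 * (\<gamma> * real n * L)\<^sup>2 * VV m \<pi> \<gamma> x + 20 * \<gamma>\<^sup>2 * L * (real n)\<^sup>2 * Dm m x xs"
  proof -
    have gen: "(1 / real n) * (\<Sum>i<n. c * (5/4 * a i + K1 + K2)) = 5/4 * c * ((1 / real n) * (\<Sum>i<n. a i)) + c * K1 + c * K2"
      for c K1 K2 :: real and a :: "nat \<Rightarrow> real"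
    proof -
      have "(\<Sum>i<n. c * (5/4 * a i + K1 + K2)) = 5/4 * c * (\<Sum>i<n. a i) + real n * (c * K1) + real n * (c * K2)"
        by (simp add: sum.distrib distrib_left sum_distrib_left mult.assoc mult.left_commute)
      thus ?thesis using n1 by (simp add: field_simps)
    qed
    show ?thesis unfolding gen by (simp add: power_mult_distrib algebra_simps)
  qed
  finally show ?thesis .
qed

end

end


lemma exp_norm_sq_var:
  fixes X :: "'b \<Rightarrow> 'c::euclidean_space"
  assumes "finite (set_pmf p)"
  shows "measure_pmf.expectation p (\<lambda>z. (norm (X z))\<^sup>2) - (norm (measure_pmf.expectation p X))\<^sup>2
       \<le> measure_pmf.expectation p (\<lambda>z. (norm (X z - c))\<^sup>2)"
proof -
  define E where "E = measure_pmf.expectation p X"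
  have "measure_pmf.expectation p (\<lambda>z. (norm (X z - c))\<^sup>2)
      = measure_pmf.expectation p (\<lambda>z. (norm (X z))\<^sup>2 - 2 * (c \<bullet> X z) + (norm c)\<^sup>2)"
    by (simp add: power2_norm_eq_inner inner_diff_left inner_diff_right inner_commute algebra_simps)
  also have "\<dots> = measure_pmf.expectation p (\<lambda>z. (norm (X z))\<^sup>2) - 2 * (c \<bullet> E) + (norm c)\<^sup>2"
    using assms unfolding E_def by (simp add: fin_int)
  finally have e: "measure_pmf.expectation p (\<lambda>z. (norm (X z - c))\<^sup>2) = measure_pmf.expectation p (\<lambda>z. (norm (X z))\<^sup>2) - 2 * (c \<bullet> E) + (norm c)\<^sup>2" .
  have "0 \<le> (norm (E - c))\<^sup>2" by simp
  hence "0 \<le> (norm E)\<^sup>2 - 2 * (c \<bullet> E) + (norm c)\<^sup>2"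
    by (simp add: power2_norm_eq_inner inner_diff_left inner_diff_right inner_commute algebra_simps)
  thus ?thesis unfolding e E_def[symmetric] by linarith
qed

lemma exp_norm_sq_ge:
  fixes X :: "'b \<Rightarrow> 'c::euclidean_space"
  assumes fin: "finite (set_pmf p)"
  shows "(norm (measure_pmf.expectation p X))\<^sup>2 \<le> measure_pmf.expectation p (\<lambda>z. (norm (X z))\<^sup>2)"
proof -
  define E where "E = measure_pmf.expectation p X"
  have "measure_pmf.expectation p (\<lambda>z. (norm (X z - E))\<^sup>2)
      = measure_pmf.expectation p (\<lambda>z. (norm (X z))\<^sup>2 - 2 * (E \<bullet> X z) + (norm E)\<^sup>2)"
    by (simp add: power2_norm_eq_inner inner_diff_left inner_diff_right inner_commute algebra_simps)
  also have "\<dots> = measure_pmf.expectation p (\<lambda>z. (norm (X z))\<^sup>2) - 2 * (E \<bullet> E) + (norm E)\<^sup>2"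
    using fin unfolding E_def by (simp add: fin_int)
  finally have e: "measure_pmf.expectation p (\<lambda>z. (norm (X z - E))\<^sup>2) = measure_pmf.expectation p (\<lambda>z. (norm (X z))\<^sup>2) - (norm E)\<^sup>2"
    by (simp add: power2_norm_eq_inner)
  have "0 \<le> measure_pmf.expectation p (\<lambda>z. (norm (X z - E))\<^sup>2)" by simp
  thus ?thesis using e unfolding E_def by linarith
qed

context nset begin

abbreviation "Q \<equiv> pmf_of_set (perms n)"
definition "EV \<gamma> x m = measure_pmf.expectation Q (\<lambda>p. VV m p \<gamma> x)"
definition "W \<gamma> x m = measure_pmf.expectation Q (\<lambda>p. vv m p \<gamma> x)"

lemma fQ: "finite (set_pmf Q)" by (simp add: perms_fin)

lemma inQ: "p \<in> set_pmf Q \<Longrightarrow> p permutes {..<n}"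
  using in_set_pmf_perms by blast

lemma VV_nn: "0 \<le> VV m p \<gamma> x"
  by (simp add: VV_def sum_nonneg)

lemma EV_nonneg: "0 \<le> EV \<gamma> x m"
  unfolding EV_def by (intro integral_nonneg_AE AE_I2 VV_nn)

lemma P1:
  assumes m: "m < M" and \<gamma>: "\<gamma> > 0"
  shows "(1 - 10 * (\<gamma> * real n * L)\<^sup>2) * EV \<gamma> x m
     \<le> 5/4 * \<gamma>\<^sup>2 * ((1/2) * (\<Sum>k<n. (norm (g m k xs))\<^sup>2) + (norm (\<Sum>k<n. g m k xs))\<^sup>2)
       + 20 * \<gamma>\<^sup>2 * L * (real n)\<^sup>2 * Dm m x xs"
proof -
  define a where "a = 10 * (\<gamma> * real n * L)\<^sup>2"
  define B where "B = (1/2) * (\<Sum>k<n. (norm (g m k xs))\<^sup>2) + (norm (\<Sum>k<n. g m k xs))\<^sup>2"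
  have pt: "(1 - a) * VV m p \<gamma> x \<le> 5/4 * \<gamma>\<^sup>2 * ((1 / real n) * (\<Sum>i<n. (norm (\<Sum>j<i. g m (p j) xs))\<^sup>2))
      + 20 * \<gamma>\<^sup>2 * L * (real n)\<^sup>2 * Dm m x xs" if "p \<in> set_pmf Q" for p
    using C1[OF m inQ[OF that] \<gamma>, of x xs] unfolding a_def by (simp add: algebra_simps)
  have "(1 - a) * EV \<gamma> x m = measure_pmf.expectation Q (\<lambda>p. (1 - a) * VV m p \<gamma> x)"
    unfolding EV_def by simp
  also have "\<dots> \<le> measure_pmf.expectation Q (\<lambda>p. 5/4 * \<gamma>\<^sup>2 * ((1 / real n) * (\<Sum>i<n. (norm (\<Sum>j<i. g m (p j) xs))\<^sup>2))
      + 20 * \<gamma>\<^sup>2 * L * (real n)\<^sup>2 * Dm m x xs)"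
    by (rule exp_mono[OF fQ pt])
  also have "\<dots> = 5/4 * \<gamma>\<^sup>2 * ((1 / real n) * (\<Sum>i<n. measure_pmf.expectation Q (\<lambda>p. (norm (\<Sum>j<i. g m (p j) xs))\<^sup>2)))
      + 20 * \<gamma>\<^sup>2 * L * (real n)\<^sup>2 * Dm m x xs"
    using fQ by (simp add: fin_int exp_sum)
  finally have ineq: "(1 - a) * EV \<gamma> x m \<le> 5/4 * \<gamma>\<^sup>2 * ((1 / real n) * (\<Sum>i<n. measure_pmf.expectation Q (\<lambda>p. (norm (\<Sum>j<i. g m (p j) xs))\<^sup>2)))
      + 20 * \<gamma>\<^sup>2 * L * (real n)\<^sup>2 * Dm m x xs" .
  have "(1 / real n) * (\<Sum>i<n. measure_pmf.expectation Q (\<lambda>p. (norm (\<Sum>j<i. g m (p j) xs))\<^sup>2)) \<le> (1 / real n) * (\<Sum>i<n. B)"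
    unfolding B_def by (intro mult_left_mono sum_mono perm_sq) auto
  also have "(1 / real n) * (\<Sum>i<n. B) = B" using n1 by simp
  finally have "5/4 * \<gamma>\<^sup>2 * ((1 / real n) * (\<Sum>i<n. measure_pmf.expectation Q (\<lambda>p. (norm (\<Sum>j<i. g m (p j) xs))\<^sup>2))) \<le> 5/4 * \<gamma>\<^sup>2 * B"
    by (intro mult_left_mono) auto
  with ineq show ?thesis unfolding a_def B_def by linarith
qed

lemma gm_diff: "m < M \<Longrightarrow> (norm (gm m x - gm m z))\<^sup>2 \<le> 2 * L * Dm m x z"
proof -
  assume m: "m < M"
  have "gm m x - gm m z = (1 / real n) *\<^sub>R (\<Sum>k<n. g m k x - g m k z)"
    unfolding gm_def by (simp add: sum_subtractf scaleR_diff_right)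
  hence "(norm (gm m x - gm m z))\<^sup>2 \<le> (1 / real n) * (\<Sum>k<n. (norm (g m k x - g m k z))\<^sup>2)"
    using norm_avg_sq_le by metis
  also have "\<dots> \<le> (1 / real n) * (2 * L * (real n * Dm m x z))"
    by (intro mult_left_mono sum_grad_diff m) simp
  also have "\<dots> = 2 * L * Dm m x z" using n1 by simp
  finally show ?thesis .
qed

context
  fixes m :: nat and \<gamma> :: real and x xs :: 'a
  assumes m: "m < M" and \<gamma>: "\<gamma> > 0"
begin

lemma P2: "fm m x - fm m xs - L / 2 * EV \<gamma> x m \<le> W \<gamma> x m \<bullet> (x - xs)"
proof -
  have "measure_pmf.expectation Q (\<lambda>p. fm m x - fm m xs - L / 2 * VV m p \<gamma> x)
      \<le> measure_pmf.expectation Q (\<lambda>p. vv m p \<gamma> x \<bullet> (x - xs))"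
    by (rule exp_mono[OF fQ]) (rule C3[OF m inQ \<gamma>])
  thus ?thesis unfolding EV_def W_def using fQ by (simp add: fin_int)
qed

lemma P3: "(norm (W \<gamma> x m - gm m x))\<^sup>2 \<le> L\<^sup>2 * EV \<gamma> x m"
proof -
  have "W \<gamma> x m - gm m x = measure_pmf.expectation Q (\<lambda>p. vv m p \<gamma> x - gm m x)"
    unfolding W_def using fQ by (simp add: fin_int)
  hence "(norm (W \<gamma> x m - gm m x))\<^sup>2 \<le> measure_pmf.expectation Q (\<lambda>p. (norm (vv m p \<gamma> x - gm m x))\<^sup>2)"
    using exp_norm_sq_ge[OF fQ] by metis
  also have "\<dots> \<le> measure_pmf.expectation Q (\<lambda>p. L\<^sup>2 * VV m p \<gamma> x)"
    by (rule exp_mono[OF fQ]) (rule C2[OF m inQ \<gamma>])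
  also have "\<dots> = L\<^sup>2 * EV \<gamma> x m" unfolding EV_def by simp
  finally show ?thesis .
qed

lemma P4: "measure_pmf.expectation Q (\<lambda>p. (norm (vv m p \<gamma> x))\<^sup>2) - (norm (W \<gamma> x m))\<^sup>2 \<le> L\<^sup>2 * EV \<gamma> x m"
proof -
  have "measure_pmf.expectation Q (\<lambda>p. (norm (vv m p \<gamma> x))\<^sup>2) - (norm (W \<gamma> x m))\<^sup>2
      \<le> measure_pmf.expectation Q (\<lambda>p. (norm (vv m p \<gamma> x - gm m x))\<^sup>2)"
    unfolding W_def by (rule exp_norm_sq_var[OF fQ])
  also have "\<dots> \<le> measure_pmf.expectation Q (\<lambda>p. L\<^sup>2 * VV m p \<gamma> x)"
    by (rule exp_mono[OF fQ]) (rule C2[OF m inQ \<gamma>])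
  also have "\<dots> = L\<^sup>2 * EV \<gamma> x m" unfolding EV_def by simp
  finally show ?thesis .
qed

lemma P5: "measure_pmf.expectation Q (\<lambda>p. (norm (vv m p \<gamma> x))\<^sup>2) \<le> 4 * L\<^sup>2 * EV \<gamma> x m + 8 * L * Dm m x xs + 2 * (norm (gm m xs))\<^sup>2"
proof -
  have pt: "(norm (vv m p \<gamma> x))\<^sup>2 \<le> 4 * L\<^sup>2 * VV m p \<gamma> x + 8 * L * Dm m x xs + 2 * (norm (gm m xs))\<^sup>2"
    if "p \<in> set_pmf Q" for p
  proof -
    have "(norm (vv m p \<gamma> x))\<^sup>2 \<le> 2 * (norm (vv m p \<gamma> x - gm m xs))\<^sup>2 + 2 * (norm (gm m xs))\<^sup>2"
      using young_2[of "vv m p \<gamma> x - gm m xs" "gm m xs"] by simp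
    moreover have "(norm (vv m p \<gamma> x - gm m xs))\<^sup>2 \<le> 2 * (norm (vv m p \<gamma> x - gm m x))\<^sup>2 + 2 * (norm (gm m x - gm m xs))\<^sup>2"
      using young_2[of "vv m p \<gamma> x - gm m x" "gm m x - gm m xs"] by simp
    moreover have "(norm (vv m p \<gamma> x - gm m x))\<^sup>2 \<le> L\<^sup>2 * VV m p \<gamma> x" by (rule C2[OF m inQ[OF that] \<gamma>])
    moreover have "(norm (gm m x - gm m xs))\<^sup>2 \<le> 2 * L * Dm m x xs" by (rule gm_diff[OF m])
    ultimately show ?thesis by linarith
  qed
  have "measure_pmf.expectation Q (\<lambda>p. (norm (vv m p \<gamma> x))\<^sup>2) \<le> measure_pmf.expectation Q (\<lambda>p. 4 * L\<^sup>2 * VV m p \<gamma> x + 8 * L * Dm m x xs + 2 * (norm (gm m xs))\<^sup>2)"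
    by (rule exp_mono[OF fQ pt])
  also have "\<dots> = 4 * L\<^sup>2 * EV \<gamma> x m + 8 * L * Dm m x xs + 2 * (norm (gm m xs))\<^sup>2"
    unfolding EV_def using fQ by (simp add: fin_int)
  finally show ?thesis .
qed

end

end


context nset begin

lemma step_form:
  "nastya_step M n C g \<gamma> \<eta> x = pmf_of_set (cohorts M C) \<bind> (\<lambda>S.
      map_pmf (\<lambda>\<pi>. x - \<eta> *\<^sub>R ((1 / real C) *\<^sub>R (\<Sum>m\<in>S. vv m (\<pi> m) \<gamma> x))) (Pi_pmf S id (\<lambda>_. Q)))"
  unfolding nastya_step_def Let_def vv_def map_pmf_def by simp

lemma norm_step_expand:
  fixes d Z :: 'a and c :: real
  shows "(norm (x - c *\<^sub>R Z - xs))\<^sup>2 = (norm (x - xs))\<^sup>2 - 2 * c * ((x - xs) \<bullet> Z) + c\<^sup>2 * (norm Z)\<^sup>2"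
proof -
  have e: "x - c *\<^sub>R Z - xs = (x - xs) + (- c) *\<^sub>R Z" by (simp add: algebra_simps)
  show ?thesis unfolding e nsq_add by (simp add: power_mult_distrib)
qed

context
  fixes \<gamma> \<eta> :: real and x xs :: 'a and C :: nat
  assumes \<gamma>: "\<gamma> > 0" and C1: "1 \<le> C" and CM: "C \<le> M"
begin

definition "Var m = measure_pmf.expectation Q (\<lambda>p. (norm (vv m p \<gamma> x))\<^sup>2) - (norm (W \<gamma> x m))\<^sup>2"

definition "inner_val S = (norm (x - xs))\<^sup>2 - 2 * \<eta> * ((x - xs) \<bullet> ((1 / real C) *\<^sub>R (\<Sum>m\<in>S. W \<gamma> x m)))
   + \<eta>\<^sup>2 * (norm ((1 / real C) *\<^sub>R (\<Sum>m\<in>S. W \<gamma> x m)))\<^sup>2 + \<eta>\<^sup>2 * (1 / (real C)\<^sup>2) * (\<Sum>m\<in>S. Var m)"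

lemma inner_eq:
  assumes S: "finite S"
  shows "measure_pmf.expectation (map_pmf (\<lambda>\<pi>. x - \<eta> *\<^sub>R ((1 / real C) *\<^sub>R (\<Sum>m\<in>S. vv m (\<pi> m) \<gamma> x))) (Pi_pmf S id (\<lambda>_. Q)))
           (\<lambda>z. (norm (z - xs))\<^sup>2) = inner_val S"
proof -
  define P where "P = Pi_pmf S id (\<lambda>_. Q)"
  have fP: "finite (set_pmf P)" unfolding P_def by (rule Pi_fin[OF S fQ])
  have eqc: "\<eta> *\<^sub>R ((1 / real C) *\<^sub>R Z) = (\<eta> / real C) *\<^sub>R Z" for Z :: 'a by simp
  have "measure_pmf.expectation (map_pmf (\<lambda>\<pi>. x - \<eta> *\<^sub>R ((1 / real C) *\<^sub>R (\<Sum>m\<in>S. vv m (\<pi> m) \<gamma> x))) P)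
           (\<lambda>z. (norm (z - xs))\<^sup>2)
      = measure_pmf.expectation P (\<lambda>\<pi>. (norm (x - xs))\<^sup>2 - 2 * (\<eta> / real C) * ((x - xs) \<bullet> (\<Sum>m\<in>S. vv m (\<pi> m) \<gamma> x))
           + (\<eta> / real C)\<^sup>2 * (norm (\<Sum>m\<in>S. vv m (\<pi> m) \<gamma> x))\<^sup>2)"
    unfolding eqc by (simp only: integral_map_pmf norm_step_expand)
  also have "\<dots> = (norm (x - xs))\<^sup>2 - 2 * (\<eta> / real C) * ((x - xs) \<bullet> measure_pmf.expectation P (\<lambda>\<pi>. \<Sum>m\<in>S. vv m (\<pi> m) \<gamma> x))
           + (\<eta> / real C)\<^sup>2 * measure_pmf.expectation P (\<lambda>\<pi>. (norm (\<Sum>m\<in>S. vv m (\<pi> m) \<gamma> x))\<^sup>2)"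
    using fP by (simp add: fin_int)
  also have "measure_pmf.expectation P (\<lambda>\<pi>. \<Sum>m\<in>S. vv m (\<pi> m) \<gamma> x) = (\<Sum>m\<in>S. W \<gamma> x m)"
    unfolding P_def W_def by (rule Pi_mean[OF S fQ])
  also have "measure_pmf.expectation P (\<lambda>\<pi>. (norm (\<Sum>m\<in>S. vv m (\<pi> m) \<gamma> x))\<^sup>2)
      = (norm (\<Sum>m\<in>S. W \<gamma> x m))\<^sup>2 + (\<Sum>m\<in>S. Var m)"
    unfolding P_def W_def Var_def using Pi_sq[OF S fQ, where u = "\<lambda>m p. vv m p \<gamma> x"] by simp
  finally show ?thesis unfolding P_def inner_val_def
    by (simp add: power_mult_distrib power_divide algebra_simps)
qed

definition "cS = real (M - C) / (real C * real (max (M - 1) 1))"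
definition "Wb = (1 / real M) *\<^sub>R (\<Sum>m<M. W \<gamma> x m)"

lemma step_bound:
  "measure_pmf.expectation (nastya_step M n C g \<gamma> \<eta> x) (\<lambda>z. (norm (z - xs))\<^sup>2)
   \<le> (norm (x - xs))\<^sup>2 - 2 * \<eta> * ((x - xs) \<bullet> Wb)
      + \<eta>\<^sup>2 * ((norm Wb)\<^sup>2 + cS * ((1 / real M) * (\<Sum>m<M. (norm (W \<gamma> x m))\<^sup>2)))
      + \<eta>\<^sup>2 * ((1 / real M) * (\<Sum>m<M. L\<^sup>2 * EV \<gamma> x m))"
proof -
  define Qc where "Qc = pmf_of_set (cohorts M C)"
  have fQc: "finite (set_pmf Qc)" unfolding Qc_def by (simp add: set_pmf_coh[OF CM] coh_fin)
  have Sfin: "finite S" if "S \<in> set_pmf Qc" for S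
    using that unfolding Qc_def set_pmf_coh[OF CM] by (auto simp: cohorts_def intro: finite_subset)
  have "measure_pmf.expectation (nastya_step M n C g \<gamma> \<eta> x) (\<lambda>z. (norm (z - xs))\<^sup>2)
      = measure_pmf.expectation Qc (\<lambda>S. measure_pmf.expectation (map_pmf (\<lambda>\<pi>. x - \<eta> *\<^sub>R ((1 / real C) *\<^sub>R (\<Sum>m\<in>S. vv m (\<pi> m) \<gamma> x))) (Pi_pmf S id (\<lambda>_. Q)))
           (\<lambda>z. (norm (z - xs))\<^sup>2))"
    unfolding step_form Qc_def[symmetric]
  proof (rule exp_bind[OF fQc])
    fix S assume "S \<in> set_pmf Qc"
    hence "finite (set_pmf (Pi_pmf S id (\<lambda>_. Q)))" by (intro Pi_fin Sfin fQ)
    thus "finite (set_pmf (map_pmf (\<lambda>\<pi>. x - \<eta> *\<^sub>R ((1 / real C) *\<^sub>R (\<Sum>m\<in>S. vv m (\<pi> m) \<gamma> x))) (Pi_pmf S id (\<lambda>_. Q))))"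
      by simp
  qed
  also have "\<dots> = measure_pmf.expectation Qc inner_val"
  proof (rule integral_cong_AE)
    show "AE S in measure_pmf Qc. measure_pmf.expectation (map_pmf (\<lambda>\<pi>. x - \<eta> *\<^sub>R ((1 / real C) *\<^sub>R (\<Sum>m\<in>S. vv m (\<pi> m) \<gamma> x))) (Pi_pmf S id (\<lambda>_. Q)))
           (\<lambda>z. (norm (z - xs))\<^sup>2) = inner_val S"
      unfolding AE_measure_pmf_iff by (intro ballI inner_eq Sfin)
  qed auto
  also have "\<dots> = (norm (x - xs))\<^sup>2 - 2 * \<eta> * ((x - xs) \<bullet> measure_pmf.expectation Qc (\<lambda>S. (1 / real C) *\<^sub>R (\<Sum>m\<in>S. W \<gamma> x m)))
      + \<eta>\<^sup>2 * measure_pmf.expectation Qc (\<lambda>S. (norm ((1 / real C) *\<^sub>R (\<Sum>m\<in>S. W \<gamma> x m)))\<^sup>2)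
      + \<eta>\<^sup>2 * (1 / (real C)\<^sup>2) * measure_pmf.expectation Qc (\<lambda>S. \<Sum>m\<in>S. Var m)"
    unfolding inner_val_def using fQc by (simp add: fin_int)
  also have "measure_pmf.expectation Qc (\<lambda>S. (1 / real C) *\<^sub>R (\<Sum>m\<in>S. W \<gamma> x m)) = Wb"
  proof -
    have "measure_pmf.expectation Qc (\<lambda>S. (1 / real C) *\<^sub>R (\<Sum>m\<in>S. W \<gamma> x m))
        = (1 / real C) *\<^sub>R measure_pmf.expectation Qc (\<lambda>S. \<Sum>m\<in>S. W \<gamma> x m)" by simp
    also have "\<dots> = (1 / real C) *\<^sub>R ((real C / real M) *\<^sub>R (\<Sum>m<M. W \<gamma> x m))"
      unfolding Qc_def by (simp add: coh_mean[OF CM])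
    also have "\<dots> = Wb" unfolding Wb_def using C1 by simp
    finally show ?thesis .
  qed
  also have "measure_pmf.expectation Qc (\<lambda>S. \<Sum>m\<in>S. Var m) = (real C / real M) * (\<Sum>m<M. Var m)"
    unfolding Qc_def using coh_mean[OF CM, of Var] by simp
  finally have e: "measure_pmf.expectation (nastya_step M n C g \<gamma> \<eta> x) (\<lambda>z. (norm (z - xs))\<^sup>2)
      = (norm (x - xs))\<^sup>2 - 2 * \<eta> * ((x - xs) \<bullet> Wb)
        + \<eta>\<^sup>2 * measure_pmf.expectation Qc (\<lambda>S. (norm ((1 / real C) *\<^sub>R (\<Sum>m\<in>S. W \<gamma> x m)))\<^sup>2)
        + \<eta>\<^sup>2 * (1 / (real C)\<^sup>2) * ((real C / real M) * (\<Sum>m<M. Var m))" .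
  have v1: "measure_pmf.expectation Qc (\<lambda>S. (norm ((1 / real C) *\<^sub>R (\<Sum>m\<in>S. W \<gamma> x m)))\<^sup>2)
      \<le> (norm Wb)\<^sup>2 + cS * ((1 / real M) * (\<Sum>m<M. (norm (W \<gamma> x m))\<^sup>2))"
    unfolding Qc_def Wb_def cS_def by (rule coh_var[OF C1 CM])
  have v2: "(1 / (real C)\<^sup>2) * ((real C / real M) * (\<Sum>m<M. Var m)) \<le> (1 / real M) * (\<Sum>m<M. L\<^sup>2 * EV \<gamma> x m)"
  proof -
    have s: "(\<Sum>m<M. Var m) \<le> (\<Sum>m<M. L\<^sup>2 * EV \<gamma> x m)"
      by (intro sum_mono) (unfold Var_def, rule P4[OF _ \<gamma>], simp)
    have nn: "0 \<le> (\<Sum>m<M. L\<^sup>2 * EV \<gamma> x m)" by (intro sum_nonneg mult_nonneg_nonneg EV_nonneg) simp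
    have eq: "(1 / (real C)\<^sup>2) * ((real C / real M) * (\<Sum>m<M. Var m)) = (1 / (real C * real M)) * (\<Sum>m<M. Var m)"
      using C1 by (simp add: power2_eq_square)
    have "(1 / (real C * real M)) * (\<Sum>m<M. Var m) \<le> (1 / (real C * real M)) * (\<Sum>m<M. L\<^sup>2 * EV \<gamma> x m)"
      by (intro mult_left_mono s) simp
    also have "\<dots> \<le> (1 / real M) * (\<Sum>m<M. L\<^sup>2 * EV \<gamma> x m)"
    proof (intro mult_right_mono nn)
      show "1 / (real C * real M) \<le> 1 / real M" using C1 M1
        by (intro divide_left_mono) (auto intro: mult_pos_pos)
    qed
    finally show ?thesis unfolding eq .
  qed
  have "\<eta>\<^sup>2 * measure_pmf.expectation Qc (\<lambda>S. (norm ((1 / real C) *\<^sub>R (\<Sum>m\<in>S. W \<gamma> x m)))\<^sup>2)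
      \<le> \<eta>\<^sup>2 * ((norm Wb)\<^sup>2 + cS * ((1 / real M) * (\<Sum>m<M. (norm (W \<gamma> x m))\<^sup>2)))"
    by (intro mult_left_mono v1) simp
  moreover have "\<eta>\<^sup>2 * (1 / (real C)\<^sup>2) * ((real C / real M) * (\<Sum>m<M. Var m))
      \<le> \<eta>\<^sup>2 * ((1 / real M) * (\<Sum>m<M. L\<^sup>2 * EV \<gamma> x m))"
    using mult_left_mono[OF v2, of "\<eta>\<^sup>2"] by (simp add: mult.assoc)
  ultimately show ?thesis unfolding e by linarith
qed

end

end


lemma arith_final:
  fixes \<eta> L \<gamma> N \<mu> R D V sb ss cS E :: real
  assumes L: "L > 0" and \<gamma>: "\<gamma> > 0" and N: "N \<ge> 1" and \<gamma>N: "\<gamma> * N \<le> \<eta>" and \<eta>L: "\<eta> \<le> 1 / (16 * L)"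
    and \<mu>: "\<mu> > 0" and cS0: "0 \<le> cS" and R0: "0 \<le> R" and DR: "\<mu> / 2 * R \<le> D"
    and V0: "0 \<le> V" and sb: "0 \<le> sb" and ss: "0 \<le> ss"
    and hV: "(1 - 10 * (\<gamma> * N * L)\<^sup>2) * V \<le> 5/4 * \<gamma>\<^sup>2 * ((1/2) * (N * sb) + N\<^sup>2 * ss) + 20 * \<gamma>\<^sup>2 * L * N\<^sup>2 * D"
    and hE: "E \<le> R - 2 * \<eta> * D + \<eta> * L * V + \<eta>\<^sup>2 * (7 * L\<^sup>2 * V + 12 * L * D) + 2 * \<eta>\<^sup>2 * cS * ss"
  shows "E \<le> (1 - \<eta> * \<mu> / 2) * R + 5/2 * \<eta> * \<gamma>\<^sup>2 * N * L * (sb + N * ss) + 4 * \<eta>\<^sup>2 * cS * ss"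
proof -
  define \<rho> where "\<rho> = \<eta> * L"
  define a where "a = \<gamma> * N * L"
  have "0 < \<gamma> * N" using \<gamma> N by simp
  hence \<eta>0: "\<eta> > 0" using \<gamma>N by linarith
  have \<rho>1: "\<rho> \<le> 1/16" unfolding \<rho>_def using \<eta>L L by (simp add: field_simps)
  have \<rho>0: "0 < \<rho>" unfolding \<rho>_def using \<eta>0 L by simp
  have a0: "0 < a" unfolding a_def using \<gamma> N L by simp
  have a\<rho>: "a \<le> \<rho>" unfolding a_def \<rho>_def using \<gamma>N L by (intro mult_right_mono) auto
  have a2: "a\<^sup>2 \<le> 1/256"
  proof -
    have "a\<^sup>2 \<le> (1/16)\<^sup>2" using a0 a\<rho> \<rho>1 by (intro power_mono) auto
    thus ?thesis by (simp add: power2_eq_square)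
  qed
  have "0 \<le> \<mu> / 2 * R" using \<mu> R0 by simp
  hence D0: "0 \<le> D" using DR by linarith
  define K where "K = 5/4 * \<gamma>\<^sup>2 * ((1/2) * (N * sb) + N\<^sup>2 * ss) + 20 * \<gamma>\<^sup>2 * L * N\<^sup>2 * D"
  have K0: "0 \<le> K" unfolding K_def using L D0 sb ss N by (intro add_nonneg_nonneg mult_nonneg_nonneg) auto
  have "246/256 * V \<le> (1 - 10 * a\<^sup>2) * V" using a2 V0 by (intro mult_right_mono) auto
  also have "\<dots> \<le> K" using hV unfolding a_def K_def .
  finally have VK: "V \<le> 256/246 * K" by simp
  have "\<eta> * L * V + \<eta>\<^sup>2 * (7 * L\<^sup>2 * V) = \<rho> * (1 + 7 * \<rho>) * V"
    unfolding \<rho>_def by (simp add: power2_eq_square algebra_simps)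
  also have "\<dots> \<le> \<rho> * (23/16) * V" using \<rho>0 \<rho>1 V0 by (intro mult_right_mono mult_left_mono) auto
  also have "\<dots> \<le> \<rho> * (23/16) * (256/246 * K)" using \<rho>0 VK by (intro mult_left_mono) auto
  also have "\<dots> = (\<rho> * K) * (368/246)" by simp
  also have "\<dots> \<le> (\<rho> * K) * (3/2)" using \<rho>0 K0 by (intro mult_left_mono) auto
  also have "\<dots> = \<rho> * (3/2) * K" by simp
  finally have t1: "\<eta> * L * V + \<eta>\<^sup>2 * (7 * L\<^sup>2 * V) \<le> \<rho> * (3/2) * K" .
  have "\<rho> * (3/2) * K = 15/16 * \<eta> * \<gamma>\<^sup>2 * N * L * sb + 15/8 * \<eta> * \<gamma>\<^sup>2 * N\<^sup>2 * L * ss + 30 * \<eta> * a\<^sup>2 * D"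
    unfolding \<rho>_def K_def a_def by (simp add: power2_eq_square algebra_simps)
  also have "30 * \<eta> * a\<^sup>2 * D \<le> 30 * \<eta> * (1/256) * D" using a2 \<eta>0 D0 by (intro mult_right_mono mult_left_mono) auto
  finally have t2: "\<rho> * (3/2) * K \<le> 15/16 * \<eta> * \<gamma>\<^sup>2 * N * L * sb + 15/8 * \<eta> * \<gamma>\<^sup>2 * N\<^sup>2 * L * ss + 30/256 * \<eta> * D"
    by simp
  have t3: "\<eta>\<^sup>2 * (12 * L * D) \<le> 3/4 * \<eta> * D"
  proof -
    have "\<eta>\<^sup>2 * (12 * L * D) = 12 * \<rho> * (\<eta> * D)" unfolding \<rho>_def by (simp add: power2_eq_square algebra_simps)
    also have "\<dots> \<le> 12 * (1/16) * (\<eta> * D)" using \<rho>1 \<eta>0 D0 by (intro mult_right_mono mult_left_mono) auto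
    finally show ?thesis by simp
  qed
  have t4: "\<eta> * (\<mu> / 2 * R) \<le> \<eta> * D" using DR \<eta>0 by (intro mult_left_mono) auto
  have t5: "15/16 * \<eta> * \<gamma>\<^sup>2 * N * L * sb \<le> 5/2 * \<eta> * \<gamma>\<^sup>2 * N * L * sb"
    using \<eta>0 \<gamma> N L sb by (intro mult_right_mono) auto
  have t6: "15/8 * \<eta> * \<gamma>\<^sup>2 * N\<^sup>2 * L * ss \<le> 5/2 * \<eta> * \<gamma>\<^sup>2 * N\<^sup>2 * L * ss"
    using \<eta>0 \<gamma> N L ss by (intro mult_right_mono) auto
  have t7: "2 * \<eta>\<^sup>2 * cS * ss \<le> 4 * \<eta>\<^sup>2 * cS * ss" using cS0 ss by (intro mult_right_mono) auto
  define P where "P = \<eta> * D"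
  define A1 where "A1 = \<eta> * \<gamma>\<^sup>2 * N * L * sb"
  define A2 where "A2 = \<eta> * \<gamma>\<^sup>2 * N\<^sup>2 * L * ss"
  define Z where "Z = \<eta>\<^sup>2 * cS * ss"
  define X where "X = \<eta> * L * V + \<eta>\<^sup>2 * (7 * L\<^sup>2 * V)"
  define Y where "Y = \<eta>\<^sup>2 * (12 * L * D)"
  define U where "U = \<eta> * (\<mu> / 2 * R)"
  have eqR: "(1 - \<eta> * \<mu> / 2) * R + 5/2 * \<eta> * \<gamma>\<^sup>2 * N * L * (sb + N * ss) + 4 * \<eta>\<^sup>2 * cS * ss
     = R - U + 5/2 * A1 + 5/2 * A2 + 4 * Z"
    unfolding U_def A1_def A2_def Z_def by (simp add: power2_eq_square algebra_simps)
  have hE': "E \<le> R - 2 * P + X + Y + 2 * Z"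
  proof -
    have "R - 2 * \<eta> * D + \<eta> * L * V + \<eta>\<^sup>2 * (7 * L\<^sup>2 * V + 12 * L * D) + 2 * \<eta>\<^sup>2 * cS * ss = R - 2 * P + X + Y + 2 * Z"
      unfolding P_def X_def Y_def Z_def by (simp add: algebra_simps)
    thus ?thesis using hE by simp
  qed
  have t2': "X \<le> 15/16 * A1 + 15/8 * A2 + 30/256 * P"
  proof -
    have "15 / 16 * \<eta> * \<gamma>\<^sup>2 * N * L * sb + 15 / 8 * \<eta> * \<gamma>\<^sup>2 * N\<^sup>2 * L * ss + 30 / 256 * \<eta> * D = 15/16 * A1 + 15/8 * A2 + 30/256 * P"
      unfolding A1_def A2_def P_def by (simp add: algebra_simps)
    thus ?thesis using t1 t2 unfolding X_def by linarith
  qed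
  have t3': "Y \<le> 3/4 * P" using t3 unfolding Y_def P_def by (simp add: algebra_simps)
  have t4': "U \<le> P" using t4 unfolding U_def P_def .
  have A10: "0 \<le> A1" unfolding A1_def using \<eta>0 \<gamma> N L sb by simp
  have A20: "0 \<le> A2" unfolding A2_def using \<eta>0 \<gamma> N L ss by simp
  have Z0: "0 \<le> Z" unfolding Z_def using cS0 ss by simp
  have P0: "0 \<le> P" unfolding P_def using \<eta>0 D0 by simp
  show ?thesis unfolding eqR using hE' t2' t3' t4' A10 A20 Z0 P0 by linarith
qed


context nset begin

definition "FF x = (1 / real M) * (\<Sum>m<M. fm m x)"
definition "GG x = (1 / real M) *\<^sub>R (\<Sum>m<M. gm m x)"

lemma global_f_eq: "global_fun M n f x = FF x"
  unfolding global_fun_def client_fun_def FF_def fm_def by simp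

lemma global_g_eq: "global_fun M n g x = GG x"
  unfolding global_fun_def client_fun_def GG_def gm_def by simp

lemma client_g_eq: "client_fun n g m x = gm m x"
  unfolding client_fun_def gm_def by simp

lemma FF_deriv: "(FF has_derivative (\<lambda>h. GG x \<bullet> h)) (at x)"
proof -
  have "((\<lambda>x. (1 / real M) * (\<Sum>m<M. (1 / real n) * (\<Sum>k<n. f m k x))) has_derivative
        (\<lambda>h. (1 / real M) * (\<Sum>m<M. (1 / real n) * (\<Sum>k<n. g m k x \<bullet> h)))) (at x)"
    by (intro derivative_intros grad) auto
  moreover have "(\<lambda>h. (1 / real M) * (\<Sum>m<M. (1 / real n) * (\<Sum>k<n. g m k x \<bullet> h))) = (\<lambda>h. GG x \<bullet> h)"
    unfolding GG_def gm_def by (simp add: inner_sum_left)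
  ultimately show ?thesis unfolding FF_def fm_def by simp
qed

context
  fixes xs :: 'a and \<mu> :: real
  assumes sc: "strongly_convex (global_fun M n f) \<mu>" and xs_min: "\<And>x. global_fun M n f xs \<le> global_fun M n f x"
    and \<mu>: "\<mu> > 0"
begin

lemma FF_min: "FF xs \<le> FF x" using xs_min[of x] by (simp add: global_f_eq)

lemma GG_zero: "GG xs = 0"
proof -
  have "(\<lambda>h. GG xs \<bullet> h) = (\<lambda>h. 0)"
    by (rule has_derivative_local_min[OF FF_deriv]) (simp add: FF_min)
  hence "GG xs \<bullet> GG xs = 0" by meson
  thus ?thesis by simp
qed

lemma sum_gm_zero: "(\<Sum>m<M. gm m xs) = 0"
  using GG_zero M1 unfolding GG_def by simp

lemma FF_sc: "\<mu> / 2 * (norm (x - xs))\<^sup>2 \<le> FF x - FF xs"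
proof (rule field_le_mult_one_interval)
  fix t :: real assume t: "0 < t" "t < 1"
  have "FF (t *\<^sub>R xs + (1 - t) *\<^sub>R x) \<le> t * FF xs + (1 - t) * FF x - \<mu> / 2 * t * (1 - t) * (norm (xs - x))\<^sup>2"
    using sc t unfolding strongly_convex_def global_f_eq by auto
  moreover have "FF xs \<le> FF (t *\<^sub>R xs + (1 - t) *\<^sub>R x)" by (rule FF_min)
  ultimately have "(1 - t) * (\<mu> / 2 * t * (norm (x - xs))\<^sup>2) \<le> (1 - t) * (FF x - FF xs)"
    by (simp add: norm_minus_commute algebra_simps)
  hence "\<mu> / 2 * t * (norm (x - xs))\<^sup>2 \<le> FF x - FF xs" using t by simp
  thus "t * (\<mu> / 2 * (norm (x - xs))\<^sup>2) \<le> FF x - FF xs" by (simp add: algebra_simps)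
qed

lemma avg_Dm: "(1 / real M) * (\<Sum>m<M. Dm m x xs) = FF x - FF xs"
proof -
  have d: "Dm m x xs = fm m x - fm m xs - gm m xs \<bullet> (x - xs)" for m
    unfolding Dm_def breg_def fm_def gm_def
    by (simp add: sum_subtractf inner_sum_left right_diff_distrib)
  have "(\<Sum>m<M. Dm m x xs) = (\<Sum>m<M. fm m x) - (\<Sum>m<M. fm m xs) - (\<Sum>m<M. gm m xs) \<bullet> (x - xs)"
    unfolding d by (simp add: sum_subtractf inner_sum_left)
  thus ?thesis unfolding FF_def sum_gm_zero by (simp add: right_diff_distrib)
qed

lemma GG_bound: "(norm (GG x))\<^sup>2 \<le> 2 * L * (FF x - FF xs)"
proof -
  have "GG x = (1 / real M) *\<^sub>R (\<Sum>m<M. gm m x - gm m xs)"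
    unfolding GG_def by (simp add: sum_subtractf sum_gm_zero)
  hence "(norm (GG x))\<^sup>2 \<le> (1 / real M) * (\<Sum>m<M. (norm (gm m x - gm m xs))\<^sup>2)"
    using norm_avg_sq_le by metis
  also have "\<dots> \<le> (1 / real M) * (\<Sum>m<M. 2 * L * Dm m x xs)"
    by (intro mult_left_mono sum_mono gm_diff) auto
  also have "\<dots> = 2 * L * ((1 / real M) * (\<Sum>m<M. Dm m x xs))" by (simp add: sum_distrib_left)
  finally show ?thesis unfolding avg_Dm .
qed

lemma mu_le_L: "\<mu> \<le> L"
proof -
  obtain b :: 'a where b: "b \<in> Basis" using nonempty_Basis by blast
  define x where "x = xs + b"
  have nb: "norm (x - xs) = 1" unfolding x_def using b by simp
  have "Dm m x xs \<le> L / 2 * (norm (x - xs))\<^sup>2" if "m < M" for m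
  proof -
    have "breg m k x xs \<le> L / 2 * (norm (x - xs))\<^sup>2" if "k < n" for k
      using descent_lemma[OF grad[OF \<open>m < M\<close> that] smooth[OF \<open>m < M\<close> that], of x xs]
      unfolding breg_def by simp
    hence "(1 / real n) * (\<Sum>k<n. breg m k x xs) \<le> (1 / real n) * (\<Sum>k<n. L / 2 * (norm (x - xs))\<^sup>2)"
      by (intro mult_left_mono sum_mono) auto
    thus ?thesis unfolding Dm_def using n1 by simp
  qed
  hence "(1 / real M) * (\<Sum>m<M. Dm m x xs) \<le> (1 / real M) * (\<Sum>m<M. L / 2 * (norm (x - xs))\<^sup>2)"
    by (intro mult_left_mono sum_mono) auto
  hence "FF x - FF xs \<le> L / 2" unfolding avg_Dm using M1 nb by simp
  moreover have "\<mu> / 2 \<le> FF x - FF xs" using FF_sc[of x] nb by simp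
  ultimately show ?thesis by simp
qed

end

end


context nset begin

context
  fixes xs :: 'a and \<mu> :: real
  assumes sc: "strongly_convex (global_fun M n f) \<mu>" and xs_min: "\<And>x. global_fun M n f xs \<le> global_fun M n f x"
    and \<mu>: "\<mu> > 0"
begin

definition "sbar = (1 / real M) * (\<Sum>m<M. (1 / real n) * (\<Sum>i<n. (norm (g m i xs))\<^sup>2))"
definition "sst = (1 / real M) * (\<Sum>m<M. (norm (client_fun n g m xs))\<^sup>2)"

lemma one_step:
  fixes \<gamma> \<eta> :: real and C :: nat and x :: 'a
  assumes \<gamma>: "\<gamma> > 0" and C1: "1 \<le> C" and CM: "C \<le> M" and \<gamma>n: "\<gamma> * real n \<le> \<eta>" and \<eta>L: "\<eta> \<le> 1 / (16 * L)"
  shows "measure_pmf.expectation (nastya_step M n C g \<gamma> \<eta> x) (\<lambda>z. (norm (z - xs))\<^sup>2)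
     \<le> (1 - \<eta> * \<mu> / 2) * (norm (x - xs))\<^sup>2 + 5/2 * \<eta> * \<gamma>\<^sup>2 * real n * L * (sbar + real n * sst)
       + 4 * \<eta>\<^sup>2 * (real (M - C) / (real C * real (max (M - 1) 1))) * sst"
proof -
  define cSv where "cSv = real (M - C) / (real C * real (max (M - 1) 1))"
  define D where "D = FF x - FF xs"
  define V where "V = (1 / real M) * (\<Sum>m<M. EV \<gamma> x m)"
  define R where "R = (norm (x - xs))\<^sup>2"
  define Wbv where "Wbv = (1 / real M) *\<^sub>R (\<Sum>m<M. W \<gamma> x m)"
  define E where "E = measure_pmf.expectation (nastya_step M n C g \<gamma> \<eta> x) (\<lambda>z. (norm (z - xs))\<^sup>2)"
  have M0: "real M > 0" using M1 by simp
  have V0: "0 \<le> V" unfolding V_def by (intro mult_nonneg_nonneg sum_nonneg EV_nonneg) auto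
  have DR: "\<mu> / 2 * R \<le> D" unfolding D_def R_def by (rule FF_sc[OF sc xs_min \<mu>])
  have "0 \<le> \<mu> / 2 * R" unfolding R_def using \<mu> by simp
  hence D0: "0 \<le> D" using DR by linarith
  have cS0: "0 \<le> cSv" unfolding cSv_def by simp
  have cS1: "cSv \<le> 1"
  proof -
    have "real (M - C) \<le> real C * real (max (M - 1) 1)"
    proof -
      have "M - C \<le> max (M - 1) 1" using C1 by simp
      also have "\<dots> \<le> C * max (M - 1) 1" using mult_le_mono1[OF C1, of "max (M - 1) 1"] by simp
      finally show ?thesis by (metis of_nat_le_iff of_nat_mult)
    qed
    moreover have "real C * real (max (M - 1) 1) > 0" using C1 by simp
    ultimately show ?thesis unfolding cSv_def by simp
  qed
  have sb0: "0 \<le> sbar" unfolding sbar_def by (intro mult_nonneg_nonneg sum_nonneg) auto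
  have ss0: "0 \<le> sst" unfolding sst_def by (intro mult_nonneg_nonneg sum_nonneg) auto
  have sst_eq: "sst = (1 / real M) * (\<Sum>m<M. (norm (gm m xs))\<^sup>2)" unfolding sst_def client_g_eq ..
  have SB: "E \<le> R - 2 * \<eta> * ((x - xs) \<bullet> Wbv) + \<eta>\<^sup>2 * ((norm Wbv)\<^sup>2 + cSv * ((1 / real M) * (\<Sum>m<M. (norm (W \<gamma> x m))\<^sup>2)))
      + \<eta>\<^sup>2 * ((1 / real M) * (\<Sum>m<M. L\<^sup>2 * EV \<gamma> x m))"
    using step_bound[OF \<gamma> C1 CM, where \<eta>=\<eta> and x=x and xs=xs]
    unfolding E_def R_def Wbv_def cSv_def cS_def[OF \<gamma> C1 CM] Wb_def[OF \<gamma> C1 CM] by simp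
  have h1: "D - L / 2 * V \<le> (x - xs) \<bullet> Wbv"
  proof -
    have "(\<Sum>m<M. fm m x - fm m xs - L / 2 * EV \<gamma> x m) \<le> (\<Sum>m<M. W \<gamma> x m \<bullet> (x - xs))"
      by (intro sum_mono P2[OF _ \<gamma>]) simp
    hence "(1 / real M) * (\<Sum>m<M. fm m x - fm m xs - L / 2 * EV \<gamma> x m) \<le> (1 / real M) * (\<Sum>m<M. W \<gamma> x m \<bullet> (x - xs))"
      by (intro mult_left_mono) auto
    moreover have "(1 / real M) * (\<Sum>m<M. fm m x - fm m xs - L / 2 * EV \<gamma> x m) = D - L / 2 * V"
    proof -
      have "(\<Sum>m<M. fm m x - fm m xs - L / 2 * EV \<gamma> x m) = (\<Sum>m<M. fm m x) - (\<Sum>m<M. fm m xs) - L / 2 * (\<Sum>m<M. EV \<gamma> x m)"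
        by (simp add: sum_subtractf sum_distrib_left)
      thus ?thesis unfolding D_def V_def FF_def by (simp add: right_diff_distrib)
    qed
    moreover have "(1 / real M) * (\<Sum>m<M. W \<gamma> x m \<bullet> (x - xs)) = (x - xs) \<bullet> Wbv"
      unfolding Wbv_def by (simp add: inner_sum_right inner_commute)
    ultimately show ?thesis by simp
  qed
  have h2: "(norm Wbv)\<^sup>2 \<le> 2 * L\<^sup>2 * V + 4 * L * D"
  proof -
    have "Wbv - GG x = (1 / real M) *\<^sub>R (\<Sum>m<M. W \<gamma> x m - gm m x)"
      unfolding Wbv_def GG_def by (simp add: sum_subtractf scaleR_diff_right)
    hence "(norm (Wbv - GG x))\<^sup>2 \<le> (1 / real M) * (\<Sum>m<M. (norm (W \<gamma> x m - gm m x))\<^sup>2)"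
      using norm_avg_sq_le by metis
    also have "\<dots> \<le> (1 / real M) * (\<Sum>m<M. L\<^sup>2 * EV \<gamma> x m)"
      by (intro mult_left_mono sum_mono P3[OF _ \<gamma>]) auto
    also have "\<dots> = L\<^sup>2 * V" unfolding V_def by (simp add: sum_distrib_left)
    finally have a: "(norm (Wbv - GG x))\<^sup>2 \<le> L\<^sup>2 * V" .
    have b: "(norm (GG x))\<^sup>2 \<le> 2 * L * D" unfolding D_def by (rule GG_bound[OF sc xs_min \<mu>])
    have "(norm Wbv)\<^sup>2 \<le> 2 * (norm (Wbv - GG x))\<^sup>2 + 2 * (norm (GG x))\<^sup>2"
      using young_2[of "Wbv - GG x" "GG x"] by simp
    with a b show ?thesis by linarith
  qed
  have h3: "(1 / real M) * (\<Sum>m<M. (norm (W \<gamma> x m))\<^sup>2) \<le> 4 * L\<^sup>2 * V + 8 * L * D + 2 * sst"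
  proof -
    have "(\<Sum>m<M. (norm (W \<gamma> x m))\<^sup>2) \<le> (\<Sum>m<M. 4 * L\<^sup>2 * EV \<gamma> x m + 8 * L * Dm m x xs + 2 * (norm (gm m xs))\<^sup>2)"
    proof (intro sum_mono)
      fix m assume "m \<in> {..<M}"
      hence m: "m < M" by simp
      have "(norm (W \<gamma> x m))\<^sup>2 \<le> measure_pmf.expectation Q (\<lambda>p. (norm (vv m p \<gamma> x))\<^sup>2)"
        unfolding W_def by (rule exp_norm_sq_ge[OF fQ])
      also have "\<dots> \<le> 4 * L\<^sup>2 * EV \<gamma> x m + 8 * L * Dm m x xs + 2 * (norm (gm m xs))\<^sup>2"
        by (rule P5[OF m \<gamma>])
      finally show "(norm (W \<gamma> x m))\<^sup>2 \<le> 4 * L\<^sup>2 * EV \<gamma> x m + 8 * L * Dm m x xs + 2 * (norm (gm m xs))\<^sup>2" .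
    qed
    hence "(1 / real M) * (\<Sum>m<M. (norm (W \<gamma> x m))\<^sup>2) \<le> (1 / real M) * (\<Sum>m<M. 4 * L\<^sup>2 * EV \<gamma> x m + 8 * L * Dm m x xs + 2 * (norm (gm m xs))\<^sup>2)"
      by (intro mult_left_mono) auto
    also have "\<dots> = 4 * L\<^sup>2 * V + 8 * L * ((1 / real M) * (\<Sum>m<M. Dm m x xs)) + 2 * sst"
      unfolding V_def sst_eq by (simp add: sum.distrib sum_distrib_left[symmetric] algebra_simps)
    also have "(1 / real M) * (\<Sum>m<M. Dm m x xs) = D" unfolding D_def by (rule avg_Dm[OF sc xs_min \<mu>])
    finally show ?thesis .
  qed
  have h4: "(1 / real M) * (\<Sum>m<M. L\<^sup>2 * EV \<gamma> x m) = L\<^sup>2 * V" unfolding V_def by (simp add: sum_distrib_left)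
  have \<eta>0: "0 \<le> \<eta>" using \<gamma>n \<gamma> by (smt (verit) of_nat_0_le_iff mult_nonneg_nonneg)
  have hq: "cSv * ((1 / real M) * (\<Sum>m<M. (norm (W \<gamma> x m))\<^sup>2)) \<le> 4 * L\<^sup>2 * V + 8 * L * D + 2 * (cSv * sst)"
  proof -
    have "cSv * ((1 / real M) * (\<Sum>m<M. (norm (W \<gamma> x m))\<^sup>2)) \<le> cSv * (4 * L\<^sup>2 * V + 8 * L * D + 2 * sst)"
      by (intro mult_left_mono h3 cS0)
    also have "\<dots> = cSv * (4 * L\<^sup>2 * V + 8 * L * D) + 2 * (cSv * sst)" by (simp add: algebra_simps)
    also have "cSv * (4 * L\<^sup>2 * V + 8 * L * D) \<le> 1 * (4 * L\<^sup>2 * V + 8 * L * D)"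
      using cS1 V0 D0 Lpos by (intro mult_right_mono) auto
    finally show ?thesis by simp
  qed
  have hE: "E \<le> R - 2 * \<eta> * D + \<eta> * L * V + \<eta>\<^sup>2 * (7 * L\<^sup>2 * V + 12 * L * D) + 2 * \<eta>\<^sup>2 * cSv * sst"
  proof -
    have i1: "- 2 * \<eta> * ((x - xs) \<bullet> Wbv) \<le> - 2 * \<eta> * (D - L / 2 * V)"
      using h1 \<eta>0 by (simp add: mult_left_mono)
    have i2: "\<eta>\<^sup>2 * ((norm Wbv)\<^sup>2 + cSv * ((1 / real M) * (\<Sum>m<M. (norm (W \<gamma> x m))\<^sup>2)))
        \<le> \<eta>\<^sup>2 * ((2 * L\<^sup>2 * V + 4 * L * D) + (4 * L\<^sup>2 * V + 8 * L * D + 2 * (cSv * sst)))"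
      using h2 hq by (intro mult_left_mono add_mono) auto
    have eq: "R + - 2 * \<eta> * (D - L / 2 * V) + \<eta>\<^sup>2 * ((2 * L\<^sup>2 * V + 4 * L * D) + (4 * L\<^sup>2 * V + 8 * L * D + 2 * (cSv * sst))) + \<eta>\<^sup>2 * (L\<^sup>2 * V)
       = R - 2 * \<eta> * D + \<eta> * L * V + \<eta>\<^sup>2 * (7 * L\<^sup>2 * V + 12 * L * D) + 2 * \<eta>\<^sup>2 * cSv * sst"
      by (simp add: algebra_simps power2_eq_square)
    have "E \<le> R + - 2 * \<eta> * ((x - xs) \<bullet> Wbv) + \<eta>\<^sup>2 * ((norm Wbv)\<^sup>2 + cSv * ((1 / real M) * (\<Sum>m<M. (norm (W \<gamma> x m))\<^sup>2)))
      + \<eta>\<^sup>2 * (L\<^sup>2 * V)" using SB unfolding h4 by simp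
    also have "\<dots> \<le> R + - 2 * \<eta> * (D - L / 2 * V) + \<eta>\<^sup>2 * ((2 * L\<^sup>2 * V + 4 * L * D) + (4 * L\<^sup>2 * V + 8 * L * D + 2 * (cSv * sst))) + \<eta>\<^sup>2 * (L\<^sup>2 * V)"
      using i1 i2 by linarith
    finally show ?thesis unfolding eq .
  qed
  have hV: "(1 - 10 * (\<gamma> * real n * L)\<^sup>2) * V \<le> 5/4 * \<gamma>\<^sup>2 * ((1/2) * (real n * sbar) + (real n)\<^sup>2 * sst) + 20 * \<gamma>\<^sup>2 * L * (real n)\<^sup>2 * D"
  proof -
    define a where "a = 1 - 10 * (\<gamma> * real n * L)\<^sup>2"
    define T where "T m = 5/4 * \<gamma>\<^sup>2 * ((1/2) * (\<Sum>k<n. (norm (g m k xs))\<^sup>2) + (norm (\<Sum>k<n. g m k xs))\<^sup>2)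
       + 20 * \<gamma>\<^sup>2 * L * (real n)\<^sup>2 * Dm m x xs" for m
    have "a * V = (1 / real M) * (\<Sum>m<M. a * EV \<gamma> x m)" unfolding V_def by (simp add: sum_distrib_left)
    also have "\<dots> \<le> (1 / real M) * (\<Sum>m<M. T m)"
      unfolding a_def T_def by (intro mult_left_mono sum_mono P1[OF _ \<gamma>]) auto
    also have "(1 / real M) * (\<Sum>m<M. T m) = 5/4 * \<gamma>\<^sup>2 * ((1/2) * ((1 / real M) * (\<Sum>m<M. \<Sum>k<n. (norm (g m k xs))\<^sup>2))
        + (1 / real M) * (\<Sum>m<M. (norm (\<Sum>k<n. g m k xs))\<^sup>2)) + 20 * \<gamma>\<^sup>2 * L * (real n)\<^sup>2 * ((1 / real M) * (\<Sum>m<M. Dm m x xs))"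
    proof -
      have gen: "(1 / real M) * (\<Sum>m<M. c1 * ((1/2) * p m + q m) + c2 * r m)
          = c1 * ((1/2) * ((1 / real M) * (\<Sum>m<M. p m)) + (1 / real M) * (\<Sum>m<M. q m)) + c2 * ((1 / real M) * (\<Sum>m<M. r m))"
        for c1 c2 :: real and p q r :: "nat \<Rightarrow> real"
      proof -
        have "(\<Sum>m<M. c1 * ((1/2) * p m + q m) + c2 * r m) = c1 * ((1/2) * (\<Sum>m<M. p m) + (\<Sum>m<M. q m)) + c2 * (\<Sum>m<M. r m)"
          by (simp add: sum.distrib distrib_left sum_distrib_left mult.assoc)
        thus ?thesis by (simp add: algebra_simps)
      qed
      show ?thesis unfolding T_def by (rule gen)
    qed
    also have "(1 / real M) * (\<Sum>m<M. Dm m x xs) = D" unfolding D_def by (rule avg_Dm[OF sc xs_min \<mu>])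
    also have "(1 / real M) * (\<Sum>m<M. \<Sum>k<n. (norm (g m k xs))\<^sup>2) = real n * sbar"
      unfolding sbar_def using n1 by (simp add: sum_divide_distrib[symmetric])
    also have "(1 / real M) * (\<Sum>m<M. (norm (\<Sum>k<n. g m k xs))\<^sup>2) = (real n)\<^sup>2 * sst"
    proof -
      have "(norm (\<Sum>k<n. g m k xs))\<^sup>2 = (real n)\<^sup>2 * (norm (gm m xs))\<^sup>2" for m
      proof -
        have "(\<Sum>k<n. g m k xs) = real n *\<^sub>R gm m xs" unfolding gm_def using n1 by simp
        thus ?thesis by (simp add: power_mult_distrib)
      qed
      thus ?thesis unfolding sst_eq by (simp add: sum_distrib_left)
    qed
    finally show ?thesis unfolding a_def .
  qed
  have "E \<le> (1 - \<eta> * \<mu> / 2) * R + 5/2 * \<eta> * \<gamma>\<^sup>2 * real n * L * (sbar + real n * sst) + 4 * \<eta>\<^sup>2 * cSv * sst"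
    by (rule arith_final[OF Lpos \<gamma> _ \<gamma>n \<eta>L \<mu> cS0 _ DR V0 sb0 ss0 hV hE]) (use n1 in \<open>auto simp: R_def\<close>)
  thus ?thesis unfolding E_def R_def cSv_def .
qed

end

end


context nset begin

lemma fin_step: "C \<le> M \<Longrightarrow> finite (set_pmf (nastya_step M n C g \<gamma> \<eta> x))"
proof -
  assume CM: "C \<le> M"
  have fS: "finite S" if "S \<in> set_pmf (pmf_of_set (cohorts M C))" for S
    using that unfolding set_pmf_coh[OF CM] by (auto simp: cohorts_def intro: finite_subset)
  show ?thesis unfolding step_form
    by (auto simp: set_pmf_coh[OF CM] coh_fin intro!: Pi_fin fQ fS)
qed

lemma fin_nastya: "C \<le> M \<Longrightarrow> finite (set_pmf (nastya M n C g \<gamma> \<eta> x0 t))"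
  by (induction t) (auto intro: fin_step)

context
  fixes xs :: 'a and \<mu> :: real
  assumes sc: "strongly_convex (global_fun M n f) \<mu>" and xs_min: "\<And>x. global_fun M n f xs \<le> global_fun M n f x"
    and \<mu>: "\<mu> > 0"
begin

lemma iterate:
  fixes \<gamma> \<eta> :: real and C T :: nat and x0 :: 'a
  assumes \<gamma>: "\<gamma> > 0" and C1: "1 \<le> C" and CM: "C \<le> M" and \<gamma>n: "\<gamma> * real n \<le> \<eta>" and \<eta>L: "\<eta> \<le> 1 / (16 * L)"
  defines "q \<equiv> 1 - \<eta> * \<mu> / 2"
    and "A \<equiv> 5/2 * \<eta> * \<gamma>\<^sup>2 * real n * L * (sbar xs + real n * sst xs)
       + 4 * \<eta>\<^sup>2 * (real (M - C) / (real C * real (max (M - 1) 1))) * sst xs"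
  shows "measure_pmf.expectation (nastya M n C g \<gamma> \<eta> x0 T) (\<lambda>z. (norm (z - xs))\<^sup>2)
     \<le> q ^ T * (norm (x0 - xs))\<^sup>2 + A / (\<eta> * \<mu> / 2)"
proof -
  have \<eta>0: "0 < \<eta>" using \<gamma> n1 \<gamma>n by (smt (verit) mult_pos_pos of_nat_0_less_iff less_le_trans zero_less_one)
  have mL: "\<mu> \<le> L" by (rule mu_le_L[OF sc xs_min \<mu>])
  have "\<eta> * \<mu> \<le> \<eta> * L" using mL \<eta>0 by simp
  also have "\<eta> * L \<le> 1/16" using \<eta>L Lpos \<eta>0 by (simp add: field_simps)
  finally have q0: "0 \<le> q" unfolding q_def by simp
  have q1: "q < 1" unfolding q_def using \<eta>0 \<mu> by simp
  have A0: "0 \<le> A"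
  proof -
    have "0 \<le> sbar xs" "0 \<le> sst xs" unfolding sbar_def[OF sc xs_min \<mu>] sst_def[OF sc xs_min \<mu>] by (auto intro!: divide_nonneg_nonneg sum_nonneg)
    thus ?thesis unfolding A_def using \<eta>0 Lpos by (intro add_nonneg_nonneg mult_nonneg_nonneg) auto
  qed
  define e where "e t = measure_pmf.expectation (nastya M n C g \<gamma> \<eta> x0 t) (\<lambda>z. (norm (z - xs))\<^sup>2)" for t
  have rec: "e (Suc t) \<le> q * e t + A" for t
  proof -
    have "e (Suc t) = measure_pmf.expectation (nastya M n C g \<gamma> \<eta> x0 t)
        (\<lambda>x. measure_pmf.expectation (nastya_step M n C g \<gamma> \<eta> x) (\<lambda>z. (norm (z - xs))\<^sup>2))"
      unfolding e_def by (simp, rule exp_bind[OF fin_nastya[OF CM] fin_step[OF CM]])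
    also have "\<dots> \<le> measure_pmf.expectation (nastya M n C g \<gamma> \<eta> x0 t) (\<lambda>x. q * (norm (x - xs))\<^sup>2 + A)"
    proof (rule exp_mono[OF fin_nastya[OF CM]])
      fix x
      show "measure_pmf.expectation (nastya_step M n C g \<gamma> \<eta> x) (\<lambda>z. (norm (z - xs))\<^sup>2) \<le> q * (norm (x - xs))\<^sup>2 + A"
        unfolding q_def A_def add.assoc[symmetric] by (rule one_step[OF sc xs_min \<mu> \<gamma> C1 CM \<gamma>n \<eta>L])
    qed
    also have "\<dots> = q * e t + A" unfolding e_def using fin_nastya[OF CM] by (simp add: fin_int)
    finally show ?thesis .
  qed
  have ind: "e t \<le> q ^ t * e 0 + A * (\<Sum>j<t. q ^ j)" for t
  proof (induction t)
    case 0 thus ?case by simp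
  next
    case (Suc t)
    have "e (Suc t) \<le> q * e t + A" by (rule rec)
    also have "\<dots> \<le> q * (q ^ t * e 0 + A * (\<Sum>j<t. q ^ j)) + A" using Suc q0 by (intro add_right_mono mult_left_mono) auto
    also have "\<dots> = q ^ Suc t * e 0 + A * (1 + q * (\<Sum>j<t. q ^ j))"
      by (simp add: algebra_simps)
    also have "(1 + q * (\<Sum>j<t. q ^ j)) = (\<Sum>j<Suc t. q ^ j)"
      using sum.lessThan_Suc_shift[of "\<lambda>j. q ^ j" t] by (simp add: sum_distrib_left)
    finally show ?case .
  qed
  have gs: "(\<Sum>j<T. q ^ j) \<le> 1 / (1 - q)"
  proof -
    have "(\<Sum>j<T. q ^ j) = (1 - q ^ T) / (1 - q)" using q1 by (simp add: sum_gp_strict)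
    also have "\<dots> \<le> 1 / (1 - q)" using q0 q1 by (intro divide_right_mono) auto
    finally show ?thesis .
  qed
  have "e T \<le> q ^ T * e 0 + A * (\<Sum>j<T. q ^ j)" by (rule ind)
  also have "A * (\<Sum>j<T. q ^ j) \<le> A * (1 / (1 - q))" using gs A0 by (rule mult_left_mono)
  also have "A * (1 / (1 - q)) = A / (\<eta> * \<mu> / 2)" unfolding q_def by simp
  finally show ?thesis unfolding e_def by simp
qed

end

end


theorem theorem1:
  fixes f :: "nat \<Rightarrow> nat \<Rightarrow> 'a::euclidean_space \<Rightarrow> real"
    and g :: "nat \<Rightarrow> nat \<Rightarrow> 'a \<Rightarrow> 'a"
    and M n C T :: nat and L \<mu> \<gamma> \<eta> :: real and x0 xs :: 'a
  assumes "M \<ge> 1" and "n \<ge> 1"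
    and grad: "\<And>m i x. m < M \<Longrightarrow> i < n \<Longrightarrow> (f m i has_derivative (\<lambda>h. g m i x \<bullet> h)) (at x)"
    and cvx: "\<And>m i. m < M \<Longrightarrow> i < n \<Longrightarrow> convex_on UNIV (f m i)"
    and smooth: "\<And>m i. m < M \<Longrightarrow> i < n \<Longrightarrow> L_smooth_grad (g m i) L"
    and F_smooth: "L_smooth_grad (global_fun M n g) L"
    and "\<mu> > 0" and F_sc: "strongly_convex (global_fun M n f) \<mu>"
    and xs_min: "\<And>x. global_fun M n f xs \<le> global_fun M n f x"
    and "\<gamma> > 0" and "1 \<le> C" and "C \<le> M"
    and "\<gamma> * real n \<le> \<eta>" and "\<eta> \<le> 1 / (16 * L)"
    and "T \<ge> 1"
  shows "measure_pmf.expectation (nastya M n C g \<gamma> \<eta> x0 T) (\<lambda>x. (norm (x - xs))\<^sup>2)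
     \<le> (1 - \<eta> * \<mu> / 2) ^ T * (norm (x0 - xs))\<^sup>2
       + 5 * \<gamma>\<^sup>2 * real n * L / \<mu> *
           ((1 / real M) * (\<Sum>m<M. (1 / real n) * (\<Sum>i<n. (norm (g m i xs))\<^sup>2))
            + real n * ((1 / real M) * (\<Sum>m<M. (norm (client_fun n g m xs))\<^sup>2)))
       + 8 * \<eta> / \<mu> * (real (M - C) / (real C * real (max (M - 1) 1)))
           * ((1 / real M) * (\<Sum>m<M. (norm (client_fun n g m xs))\<^sup>2))"
proof -
  have "0 < \<gamma> * real n" using assms(2,10) by simp
  hence \<eta>0: "0 < \<eta>" using assms(13) by linarith
  hence "0 < 1 / (16 * L)" using assms(14) by linarith
  hence Lpos: "L > 0" by (simp add: zero_less_divide_iff)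
  interpret nset f g M n L
    by unfold_locales (use assms Lpos in auto)
  define sb where "sb = (1 / real M) * (\<Sum>m<M. (1 / real n) * (\<Sum>i<n. (norm (g m i xs))\<^sup>2))"
  define ss where "ss = (1 / real M) * (\<Sum>m<M. (norm (client_fun n g m xs))\<^sup>2)"
  define cS where "cS = real (M - C) / (real C * real (max (M - 1) 1))"
  have it: "measure_pmf.expectation (nastya M n C g \<gamma> \<eta> x0 T) (\<lambda>z. (norm (z - xs))\<^sup>2)
     \<le> (1 - \<eta> * \<mu> / 2) ^ T * (norm (x0 - xs))\<^sup>2
       + (5/2 * \<eta> * \<gamma>\<^sup>2 * real n * L * (sb + real n * ss) + 4 * \<eta>\<^sup>2 * cS * ss) / (\<eta> * \<mu> / 2)"
    using iterate[OF F_sc xs_min assms(7) assms(10) assms(11) assms(12) assms(13) assms(14), of x0 T]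
    unfolding sbar_def[OF F_sc xs_min assms(7)] sst_def[OF F_sc xs_min assms(7)] sb_def ss_def cS_def .
  have eq: "(5/2 * \<eta> * \<gamma>\<^sup>2 * real n * L * (sb + real n * ss) + 4 * \<eta>\<^sup>2 * cS * ss) / (\<eta> * \<mu> / 2)
      = 5 * \<gamma>\<^sup>2 * real n * L / \<mu> * (sb + real n * ss) + 8 * \<eta> / \<mu> * cS * ss"
    using \<eta>0 assms(7) by (simp add: field_simps power2_eq_square)
  have it2: "measure_pmf.expectation (nastya M n C g \<gamma> \<eta> x0 T) (\<lambda>z. (norm (z - xs))\<^sup>2)
     \<le> (1 - \<eta> * \<mu> / 2) ^ T * (norm (x0 - xs))\<^sup>2
       + (5 * \<gamma>\<^sup>2 * real n * L / \<mu> * (sb + real n * ss) + 8 * \<eta> / \<mu> * cS * ss)"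
    using it unfolding eq .
  show ?thesis unfolding add.assoc using it2[unfolded sb_def ss_def cS_def] .
qed


end
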